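(* Let $D$ be a rank two filtered $(\varphi,N,L/K,E)$-module with $N=0$, which is F-semisimple and not F-scalar, with standard basis $\underline\eta$, $[\varphi]_{\underline\eta}=\mathrm{diag}(\alpha\cdot\vec1,\delta\cdot\vec1)$ ($\alpha,\delta\in E^\times$, $\alpha^f\neq\delta^f$), and filtration $\mathcal F(\vec x,\vec y;\underline k)$ with $k_i\ge0$. Then $D$ is weakly admissible if and only if (i) $ef\,v_p(\alpha\delta)=\sum_{i=0}^{m-1}k_i$, (ii) $ef\,v_p(\alpha)\ge\sum_{\{i:y_i=0\}}k_i$, and (iii) $ef\,v_p(\delta)\ge\sum_{\{i:x_i=0\}}k_i$. Assume $D$ is weakly admissible. Then: $D$ is irreducible if and only if both (ii) and (iii) are strict; $D$ has exactly one nonzero proper weakly admissible sub-object if and only if exactly one of (ii), (iii) is strict (it is $D_2=E^f\eta_2$ if (ii) is strict and $D_1=E^f\eta_1$ if (iii) is strict); and both $D_1$ and $D_2$ are weakly admissible sub-objects (so $D\cong D_1\oplus D_2$) if and only if there is no index $i$ with $k_i>0$, $x_i\ne0$ and $y_i\neq0$.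
   Context: Setting: $p$ prime, $K/\mathbb{Q}_p$ finite, $L/K$ finite Galois, $G=\mathrm{Gal}(L/K)$, $L_0$ maximal unramified subfield of $L$, $f=[L_0:\mathbb{Q}_p]$, $e=[L:L_0]$, $m=ef$, $E$ finite over $\mathbb{Q}_p$ containing all embeddings of $L$; $v_p$ the valuation on $\overline{\mathbb{Q}}_p$ with $v_p(p)=1$. $L_0\otimes E\cong E^f$, $L\otimes E\cong E^m$ (via embeddings $\tau_j$ of $L_0$ and $\sigma_{fi+j}$ of $L$ extending $\tau_j$), $E^f\to E^m$ is $\vec a\mapsto\vec a^{\otimes e}$; $\varphi(x_0,\dots,x_{f-1})=(x_1,\dots,x_{f-1},x_0)$. A rank two filtered $(\varphi,N,L/K,E)$-module: free $E^f$-module $D$ of rank 2 with $\varphi$-semilinear bijection $\varphi$, nilpotent $E^f$-linear $N$ with $N\varphi=p\varphi N$, a filtration on $D_L=L\otimes_{L_0}D$, and a semilinear $E$-linear $G$-action commuting with $\varphi,N$ and preserving the filtration. Here the basis is as in the F-semisimple non-scalar case, the $G$-action is diagonal in $\underline\eta$, and the filtration is $\mathrm{Fil}^jD_L=D_L$ ($j\le0$), $\mathrm{Fil}^jD_L=E^mf_{\{i:k_i\ge j\}}(\vec x(1\otimes\eta_1)+\vec y(1\otimes\eta_2))$ ($j\ge1$), with $\vec x,\vec y\in E^m$, $(x_i,y_i)\ne(0,0)$ for all $i$, $f_J=\sum_{s\in J}e_s$. Invariants: for a filtered $E^m$-module $M$, $t_H(M)=\sum_s\sum_j j\dim_E(e_s\mathrm{Fil}^jM/e_s\mathrm{Fil}^{j+1}M)$;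 for a $\varphi$-stable $E^f$-submodule $D'$ free of rank $r$ with $[\varphi|_{D'}]=A\in GL_r(E^f)$, $t_N(D')=e\cdot v_p\big(\prod_{j=0}^{f-1}(\det A)_j\big)$; $D'_L=L\otimes_{L_0}D'$ has the induced filtration $D'_L\cap\mathrm{Fil}^jD_L$. $D$ is weakly admissible if $t_H(D_L)=t_N(D)$ and $t_H(D'_L)\le t_N(D')$ for every $E^f$-submodule $D'$ stable under $\varphi$ and $N$. A weakly admissible sub-object is a nonzero $E^f$-submodule $D'$ stable under $\varphi$, $N$ and $G$ with $t_H(D'_L)=t_N(D')$; a weakly admissible $D$ is irreducible if it has no proper such $D'$. *)

theory Defs
  imports Main "HOL-Library.Function_Algebras" "HOL-Library.Groups_Big_Fun"
    "Jordan_Normal_Form.Determinant"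
begin

text \<open>An element d of D = (E^f)^2 (resp. of D_L = (E^m)^2) is a
  function d :: nat => nat => 'e, where d t j is the j-th component (in E^n,
  n = f resp. m) of the coefficient of eta_t, t in {1,2}.  All other values are 0.\<close>

type_synonym 'a vec2 = "nat \<Rightarrow> nat \<Rightarrow> 'a"

definition Dcar :: "nat \<Rightarrow> 'a::zero vec2 set" where
  "Dcar n = {d. \<forall>t j. (t \<notin> {1,2} \<or> n \<le> j) \<longrightarrow> d t j = 0}"

definition Dline1 :: "nat \<Rightarrow> 'a::zero vec2 set" where
  "Dline1 n = {d \<in> Dcar n. \<forall>j. d 2 j = 0}"

definition Dline2 :: "nat \<Rightarrow> 'a::zero vec2 set" where
  "Dline2 n = {d \<in> Dcar n. \<forall>j. d 1 j = 0}"

definition smul :: "(nat \<Rightarrow> 'a::times) \<Rightarrow> 'a vec2 \<Rightarrow> 'a vec2" where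
  "smul c d = (\<lambda>t j. c j * d t j)"

definition submod :: "nat \<Rightarrow> 'a::comm_ring_1 vec2 set \<Rightarrow> bool" where
  "submod n M \<longleftrightarrow> M \<subseteq> Dcar n \<and> 0 \<in> M \<and> (\<forall>a\<in>M. \<forall>b\<in>M. a + b \<in> M)
     \<and> (\<forall>c. \<forall>a\<in>M. smul c a \<in> M)"

text \<open>Frobenius: phi(a eta_1 + b eta_2) = alpha phi(a) eta_1 + delta phi(b) eta_2,
  phi(x_0,...,x_{f-1}) = (x_1,...,x_{f-1},x_0)\<close>
definition phiD :: "nat \<Rightarrow> 'a::comm_ring_1 \<Rightarrow> 'a \<Rightarrow> 'a vec2 \<Rightarrow> 'a vec2" where
  "phiD f \<alpha> \<delta> d = (\<lambda>t j. if j < f then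
       (if t = 1 then \<alpha> * d 1 ((j + 1) mod f)
        else if t = 2 then \<delta> * d 2 ((j + 1) mod f) else 0) else 0)"

definition is_free_basis :: "nat \<Rightarrow> 'a::comm_ring_1 vec2 set \<Rightarrow> nat \<Rightarrow> (nat \<Rightarrow> 'a vec2) \<Rightarrow> bool" where
  "is_free_basis f M r w \<longleftrightarrow> (\<forall>l<r. w l \<in> M) \<and>
     (\<forall>d\<in>M. \<exists>!c. (\<forall>l i. (r \<le> l \<or> f \<le> i) \<longrightarrow> c l i = 0) \<and> d = (\<Sum>l<r. smul (c l) (w l)))"

definition is_phi_matrix :: "nat \<Rightarrow> 'a::field \<Rightarrow> 'a \<Rightarrow> nat \<Rightarrow> (nat \<Rightarrow> 'a vec2)
     \<Rightarrow> (nat \<Rightarrow> nat \<Rightarrow> nat \<Rightarrow> 'a) \<Rightarrow> bool" where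
  "is_phi_matrix f \<alpha> \<delta> r w A \<longleftrightarrow>
     (\<forall>k l i. (r \<le> k \<or> r \<le> l \<or> f \<le> i) \<longrightarrow> A k l i = 0) \<and>
     (\<forall>i<f. det (mat r r (\<lambda>(k, l). A k l i)) \<noteq> 0) \<and>
     (\<forall>l<r. phiD f \<alpha> \<delta> (w l) = (\<Sum>k<r. smul (A k l) (w k)))"

definition tN :: "('a::field \<Rightarrow> real) \<Rightarrow> nat \<Rightarrow> nat \<Rightarrow> 'a \<Rightarrow> 'a \<Rightarrow> 'a vec2 set \<Rightarrow> real" where
  "tN v f e \<alpha> \<delta> M = (case SOME (r, w, A). is_free_basis f M r w \<and> is_phi_matrix f \<alpha> \<delta> r w A of
      (r, w, A) \<Rightarrow> real e * v (\<Prod>i<f. det (mat r r (\<lambda>(k, l). A k l i))))"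

text \<open>base change D -> D_L = L (x)_{L_0} D, via E^f -> E^m, a |-> a^{(x) e}
  (component s = f i + j of E^m receives component j of E^f)\<close>
definition bc :: "nat \<Rightarrow> nat \<Rightarrow> 'a::zero vec2 \<Rightarrow> 'a vec2" where
  "bc f m d = (\<lambda>t s. if s < m then d t (s mod f) else 0)"

text \<open>M_L = L (x)_{L_0} M, realised as the E^m-submodule of D_L generated by M\<close>
definition baseL :: "nat \<Rightarrow> nat \<Rightarrow> 'a::comm_ring_1 vec2 set \<Rightarrow> 'a vec2 set" where
  "baseL f m M = \<Inter> {N. submod m N \<and> bc f m ` M \<subseteq> N}"

definition Fil :: "nat \<Rightarrow> (nat \<Rightarrow> int) \<Rightarrow> (nat \<Rightarrow> 'a::comm_ring_1) \<Rightarrow> (nat \<Rightarrow> 'a) \<Rightarrow> int \<Rightarrow> 'a vec2 set" where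
  "Fil m k x y j = (if j \<le> 0 then Dcar m else
     {d. \<exists>c. d = (\<lambda>t s. if s < m \<and> j \<le> k s then
                 c s * (if t = 1 then x s else if t = 2 then y s else 0) else 0)})"

definition eproj :: "nat \<Rightarrow> 'a::zero vec2 \<Rightarrow> 'a vec2" where
  "eproj s d = (\<lambda>t u. if u = s then d t u else 0)"

definition Edim :: "'a::field vec2 set \<Rightarrow> nat" where
  "Edim S = vector_space.dim (\<lambda>c d. (\<lambda>t u. c * d t u)) S"

text \<open>t_H of a filtered E^m-module with filtration Fl;
  dim_E(e_s Fil^j / e_s Fil^{j+1}) = dim e_s Fil^j - dim e_s Fil^{j+1}\<close>
definition tH :: "nat \<Rightarrow> (int \<Rightarrow> 'a::field vec2 set) \<Rightarrow> int" where
  "tH m Fl = (\<Sum>s<m. Sum_any (\<lambda>j::int. j *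
      (int (Edim (eproj s ` Fl j)) - int (Edim (eproj s ` Fl (j + 1))))))"

definition tH_sub :: "nat \<Rightarrow> nat \<Rightarrow> (nat \<Rightarrow> int) \<Rightarrow> (nat \<Rightarrow> 'a::field) \<Rightarrow> (nat \<Rightarrow> 'a)
     \<Rightarrow> 'a vec2 set \<Rightarrow> int" where
  "tH_sub f e k x y M = tH (e * f) (\<lambda>j. baseL f (e * f) M \<inter> Fil (e * f) k x y j)"

text \<open>weak admissibility (N = 0, so every submodule is N-stable)\<close>
definition weakly_admissible :: "('a::field \<Rightarrow> real) \<Rightarrow> nat \<Rightarrow> nat \<Rightarrow> 'a \<Rightarrow> 'a
     \<Rightarrow> (nat \<Rightarrow> int) \<Rightarrow> (nat \<Rightarrow> 'a) \<Rightarrow> (nat \<Rightarrow> 'a) \<Rightarrow> bool" where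
  "weakly_admissible v f e \<alpha> \<delta> k x y \<longleftrightarrow>
     real_of_int (tH_sub f e k x y (Dcar f)) = tN v f e \<alpha> \<delta> (Dcar f) \<and>
     (\<forall>M. submod f M \<and> phiD f \<alpha> \<delta> ` M \<subseteq> M \<longrightarrow>
          real_of_int (tH_sub f e k x y M) \<le> tN v f e \<alpha> \<delta> M)"

definition wa_subobject :: "('a::field \<Rightarrow> real) \<Rightarrow> nat \<Rightarrow> nat \<Rightarrow> 'a \<Rightarrow> 'a
     \<Rightarrow> (nat \<Rightarrow> int) \<Rightarrow> (nat \<Rightarrow> 'a) \<Rightarrow> (nat \<Rightarrow> 'a) \<Rightarrow> 'g set \<Rightarrow> ('g \<Rightarrow> 'a vec2 \<Rightarrow> 'a vec2)
     \<Rightarrow> 'a vec2 set \<Rightarrow> bool" where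
  "wa_subobject v f e \<alpha> \<delta> k x y G act M \<longleftrightarrow>
     M \<noteq> {0} \<and> submod f M \<and> phiD f \<alpha> \<delta> ` M \<subseteq> M \<and> (\<forall>g\<in>G. act g ` M \<subseteq> M) \<and>
     real_of_int (tH_sub f e k x y M) = tN v f e \<alpha> \<delta> M"

definition irreducible_wa :: "('a::field \<Rightarrow> real) \<Rightarrow> nat \<Rightarrow> nat \<Rightarrow> 'a \<Rightarrow> 'a
     \<Rightarrow> (nat \<Rightarrow> int) \<Rightarrow> (nat \<Rightarrow> 'a) \<Rightarrow> (nat \<Rightarrow> 'a) \<Rightarrow> 'g set \<Rightarrow> ('g \<Rightarrow> 'a vec2 \<Rightarrow> 'a vec2) \<Rightarrow> bool" where
  "irreducible_wa v f e \<alpha> \<delta> k x y G act \<longleftrightarrow> weakly_admissible v f e \<alpha> \<delta> k x y \<and>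
     \<not> (\<exists>M. wa_subobject v f e \<alpha> \<delta> k x y G act M \<and> M \<noteq> Dcar f)"

end

theory Submission
  imports Defs
begin


definition lam :: "'a \<Rightarrow> 'a \<Rightarrow> nat \<Rightarrow> 'a::zero" where
  "lam a b t = (if t = 1 then a else if t = 2 then b else 0)"
definition unitv :: "nat \<Rightarrow> nat \<Rightarrow> 'a::{zero,one} vec2" where
  "unitv t i = (\<lambda>t' j. if t' = t \<and> j = i then 1 else 0)"
definition ones :: "nat \<Rightarrow> nat \<Rightarrow> 'a::{zero,one} vec2" where
  "ones t n = (\<lambda>t' j. if t' = t \<and> j < n then 1 else 0)"
definition DL :: "nat \<Rightarrow> nat \<Rightarrow> 'a::zero vec2 set" where
  "DL t n = {d \<in> Dcar n. \<forall>j. d (3 - t) j = 0}"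

lemma Dline1_DL: "Dline1 n = DL 1 n" by (simp add: Dline1_def DL_def)
lemma Dline2_DL: "Dline2 n = DL 2 n" by (simp add: Dline2_def DL_def)

lemma sum_vec2: "(sum F A) t j = sum (\<lambda>l. F l t j) A"
  by (induction A rule: infinite_finite_induct) auto

lemma phiD_eq: "phiD f a b d t j = (if j < f then lam a b t * d t ((j + 1) mod f) else 0)"
  by (simp add: phiD_def lam_def)

lemma phiD_Dcar: "phiD f a b d \<in> Dcar f"
  by (auto simp: Dcar_def phiD_eq lam_def)

lemma phi_pow:
  assumes "d \<in> Dcar f" "j < f"
  shows "((phiD f a b) ^^ n) d t j = lam a b t ^ n * d t ((j + n) mod f)"
  using assms(2)
proof (induction n arbitrary: j)
  case 0
  then show ?case by simp
next
  case (Suc n)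
  have f0: "0 < f" using Suc.prems by simp
  have IH: "((phiD f a b) ^^ n) d t ((j + 1) mod f) = lam a b t ^ n * d t (((j + 1) mod f + n) mod f)"
    using Suc.IH[of "(j + 1) mod f"] f0 by simp
  have "((phiD f a b) ^^ Suc n) d t j = phiD f a b (((phiD f a b) ^^ n) d) t j" by simp
  also have "\<dots> = lam a b t * ((phiD f a b) ^^ n) d t ((j + 1) mod f)"
    using Suc.prems by (simp only: phiD_eq if_True)
  also have "\<dots> = lam a b t * (lam a b t ^ n * d t (((j + 1) mod f + n) mod f))"
    using IH by simp
  also have "((j + 1) mod f + n) mod f = (j + Suc n) mod f"
    by (simp add: mod_add_left_eq)
  finally show ?case by simp
qed

lemma submod_smul: "submod n M \<Longrightarrow> a \<in> M \<Longrightarrow> smul c a \<in> M"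
  by (simp add: submod_def)
lemma submod_add: "submod n M \<Longrightarrow> a \<in> M \<Longrightarrow> b \<in> M \<Longrightarrow> a + b \<in> M"
  by (simp add: submod_def)
lemma submod_Dcar: "submod n M \<Longrightarrow> a \<in> M \<Longrightarrow> a \<in> Dcar n"
  by (auto simp: submod_def)
lemma Dcar_zero: "a \<in> Dcar n \<Longrightarrow> t \<notin> {1,2} \<or> n \<le> j \<Longrightarrow> a t j = 0"
  by (auto simp: Dcar_def)

lemma submod_sum:
  assumes "submod n M" "\<forall>a\<in>A. F a \<in> M"
  shows "sum F A \<in> M"
  using assms(2)
proof (induction A rule: infinite_finite_induct)
  case (infinite A) then show ?case using assms(1) by (metis sum.infinite submod_def)
next
  case empty then show ?case using assms(1) by (metis sum.empty submod_def)
next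
  case (insert x B)
  then have "F x + sum F B \<in> M" by (intro submod_add[OF assms(1)]) auto
  then show ?case using insert by (metis sum.insert)
qed

lemma phi_pow_stable:
  assumes "phiD f a b ` M \<subseteq> M" "d \<in> M"
  shows "((phiD f a b) ^^ n) d \<in> M"
  using assms by (induction n) auto

lemma mod_lt2: "(x::nat) < 2 * (f::nat) \<Longrightarrow> x mod f = (if x < f then x else x - f)"
  by (cases "x < f") (auto simp: le_mod_geq)

lemma mod_add_rcancel_nat: "((a::nat) + n) mod f = (b + n) mod f \<Longrightarrow> a mod f = b mod f"
proof -
  assume h: "(a + n) mod f = (b + n) mod f"
  then have h': "(int a + int n) mod int f = (int b + int n) mod int f"
    by (metis of_nat_add of_nat_mod)
  have "int a mod int f = ((int a + int n) mod int f - int n) mod int f"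
    by (simp add: mod_diff_left_eq)
  also have "\<dots> = ((int b + int n) mod int f - int n) mod int f" using h' by simp
  also have "\<dots> = int b mod int f" by (simp add: mod_diff_left_eq)
  finally have "int (a mod f) = int (b mod f)" by (simp add: zmod_int)
  then show ?thesis by simp
qed
lemma shift_mod_eq:
  assumes "(i::nat) < f" "j < f" "j' < f"
  shows "(j' + (i + f - j)) mod f = i \<longleftrightarrow> j' = j"
proof
  assume h: "(j' + (i + f - j)) mod f = i"
  have "j + (i + f - j) = i + f" using assms by simp
  then have "(j + (i + f - j)) mod f = i" using assms by simp
  with h have "(j' + (i + f - j)) mod f = (j + (i + f - j)) mod f" by simp
  then have "j' mod f = j mod f" by (rule mod_add_rcancel_nat)
  then show "j' = j" using assms by simp
next
  assume "j' = j"
  then have "j' + (i + f - j) = i + f" using assms by simp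
  then show "(j' + (i + f - j)) mod f = i" using assms by simp
qed
lemma phi_pow_Dcar: "0 < n \<Longrightarrow> ((phiD f a b) ^^ n) d \<in> Dcar f"
  by (cases n) (auto simp: phiD_Dcar)

lemma line_in:
  fixes a b :: "'a::field"
  assumes f1: "1 \<le> f" and sm: "submod f M" and st: "phiD f a b ` M \<subseteq> M" and t: "t \<in> {1,2}"
    and ne: "lam a b t ^ f \<noteq> lam a b (3 - t) ^ f" and l0: "lam a b t \<noteq> 0"
    and dM: "d \<in> M" and dti: "d t i \<noteq> 0"
  shows "DL t f \<subseteq> M"
proof -
  have dD: "d \<in> Dcar f" using sm dM by (rule submod_Dcar)
  have i: "i < f" using Dcar_zero[OF dD, of t i] dti t by fastforce
  define d1 where "d1 = smul (\<lambda>j. if j = i then 1 else 0) d"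
  have d1M: "d1 \<in> M" unfolding d1_def using sm dM by (rule submod_smul)
  have d1D: "d1 \<in> Dcar f" using sm d1M by (rule submod_Dcar)
  define X where "X = ((phiD f a b) ^^ f) d1"
  have XM: "X \<in> M" unfolding X_def using st d1M by (rule phi_pow_stable)
  have XD: "X \<in> Dcar f" unfolding X_def using f1 by (intro phi_pow_Dcar) simp
  have Xv: "X t' j = lam a b t' ^ f * d1 t' j" if "j < f" for t' j
    unfolding X_def using phi_pow[OF d1D that] that by simp
  define c0 where "c0 = (lam a b (3 - t) ^ f - lam a b t ^ f) * d t i"
  have c0: "c0 \<noteq> 0" using ne dti unfolding c0_def by simp
  define Z where "Z = smul (\<lambda>_. 1 / c0) (smul (\<lambda>_. -1) X + smul (\<lambda>_. lam a b (3 - t) ^ f) d1)"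
  have ZM: "Z \<in> M" unfolding Z_def
    by (intro submod_smul[OF sm] submod_add[OF sm] XM d1M)
  have Zu: "Z = unitv t i"
  proof (rule ext, rule ext)
    fix t' j
    show "Z t' j = unitv t i t' j"
    proof (cases "j < f")
      case False
      then have "X t' j = 0" "d1 t' j = 0" using Dcar_zero[OF XD, of t' j] Dcar_zero[OF d1D, of t' j] by auto
      then show ?thesis using False i
        by (simp add: Z_def smul_def unitv_def)
    next
      case True
      have "Z t' j = (1 / c0) * ((lam a b (3 - t) ^ f - lam a b t' ^ f) * d1 t' j)"
        unfolding Z_def smul_def using Xv[OF True] by (simp add: algebra_simps)
      also have "\<dots> = unitv t i t' j"
      proof (cases "t' \<in> {1,2}")
        case False
        then show ?thesis using Dcar_zero[OF d1D, of t' j] t by (auto simp: unitv_def)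
      next
        case True
        then have "t' = t \<or> t' = 3 - t" using t by auto
        then show ?thesis
        proof
          assume tt: "t' = t"
          show ?thesis
          proof (cases "j = i")
            case True
            then have "d1 t' j = d t i" using tt by (simp add: d1_def smul_def)
            then show ?thesis using tt True c0 by (simp add: c0_def unitv_def)
          next
            case False
            then have "d1 t' j = 0" by (simp add: d1_def smul_def)
            then show ?thesis using False by (simp add: unitv_def)
          qed
        next
          assume tt: "t' = 3 - t"
          then have "t' \<noteq> t" using t by auto
          then show ?thesis using tt by (simp add: unitv_def)
        qed
      qed
      finally show ?thesis .
    qed
  qed
  have uM: "unitv t j \<in> M" if j: "j < f" for j
  proof -
    define n where "n = i + f - j"
    have n0: "0 < n" using j unfolding n_def by simp
    define W where "W = ((phiD f a b) ^^ n) (unitv t i)"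
    have uiM: "unitv t i \<in> M" using ZM Zu by simp
    have WM: "W \<in> M" unfolding W_def using st uiM by (rule phi_pow_stable)
    have uD: "(unitv t i :: 'a vec2) \<in> Dcar f" using submod_Dcar[OF sm uiM] .
    have WD: "W \<in> Dcar f" unfolding W_def using n0 by (rule phi_pow_Dcar)
    have "smul (\<lambda>_. 1 / lam a b t ^ n) W = unitv t j"
    proof (rule ext, rule ext)
      fix t' j'
      show "smul (\<lambda>_. 1 / lam a b t ^ n) W t' j' = unitv t j t' j'"
      proof (cases "j' < f")
        case False
        then have "W t' j' = 0" using Dcar_zero[OF WD, of t' j'] by auto
        then show ?thesis using False j by (simp add: smul_def unitv_def)
      next
        case True
        have "W t' j' = lam a b t' ^ n * unitv t i t' ((j' + n) mod f)"
          unfolding W_def by (rule phi_pow[OF uD True])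
        moreover have sh: "(j' + n) mod f = i \<longleftrightarrow> j' = j"
          using shift_mod_eq[OF i j True] unfolding n_def .
        ultimately show ?thesis using l0
          by (cases "t' = t") (simp_all add: smul_def unitv_def)
      qed
    qed
    moreover have "smul (\<lambda>_. 1 / lam a b t ^ n) W \<in> M" by (rule submod_smul[OF sm WM])
    ultimately show ?thesis by simp
  qed
  have oM: "ones t f \<in> M"
  proof -
    have "(\<Sum>j<f. unitv t j) \<in> M" using uM by (intro submod_sum[OF sm]) auto
    moreover have "(\<Sum>j<f. unitv t j) = (ones t f :: 'a vec2)"
    proof (rule ext, rule ext)
      fix t' j'
      show "(\<Sum>j<f. unitv t j) t' j' = (ones t f :: 'a vec2) t' j'"
        by (cases "t' = t") (simp_all add: sum_vec2 unitv_def ones_def)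
    qed
    ultimately show ?thesis by simp
  qed
  show ?thesis
  proof
    fix d' :: "'a vec2" assume d': "d' \<in> DL t f"
    have "d' = smul (\<lambda>j. d' t j) (ones t f)"
    proof (rule ext, rule ext)
      fix t' j
      show "d' t' j = smul (\<lambda>j. d' t j) (ones t f) t' j"
        using d' t by (cases "t' = 2"; cases "t' = 1") (auto simp: DL_def Dcar_def smul_def ones_def)
    qed
    moreover have "smul (\<lambda>j. d' t j) (ones t f) \<in> M" by (rule submod_smul[OF sm oM])
    ultimately show "d' \<in> M" by simp
  qed
qed

lemma lam_simps[simp]: "lam a b 1 = a" "lam a b 2 = b" "lam a b (Suc 0) = a"
  by (auto simp: lam_def)

lemma DL_sub: "DL t n \<subseteq> Dcar n" by (auto simp: DL_def)

lemma Dcar_split: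
  fixes d :: "'a::comm_ring_1 vec2"
  assumes "d \<in> Dcar n"
  shows "d = (\<lambda>t j. if t = 1 then d t j else 0) + (\<lambda>t j. if t = 2 then d t j else 0)"
    and "(\<lambda>t j. if t = 1 then d t j else 0) \<in> DL 1 n"
    and "(\<lambda>t j. if t = 2 then d t j else 0) \<in> DL 2 n"
proof -
  show "d = (\<lambda>t j. if t = 1 then d t j else 0) + (\<lambda>t j. if t = 2 then d t j else 0)"
  proof (rule ext, rule ext)
    fix t j show "d t j = ((\<lambda>t j. if t = 1 then d t j else 0) + (\<lambda>t j. if t = 2 then d t j else 0)) t j"
      using assms by (cases "t = 1"; cases "t = 2") (auto simp: Dcar_def)
  qed
  show "(\<lambda>t j. if t = 1 then d t j else 0) \<in> DL 1 n" using assms by (auto simp: DL_def Dcar_def)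
  show "(\<lambda>t j. if t = 2 then d t j else 0) \<in> DL 2 n" using assms by (auto simp: DL_def Dcar_def)
qed

lemma classify:
  fixes a b :: "'a::field"
  assumes f1: "1 \<le> f" and sm: "submod f M" and st: "phiD f a b ` M \<subseteq> M"
    and a0: "a \<noteq> 0" and b0: "b \<noteq> 0" and ab: "a ^ f \<noteq> b ^ f"
  shows "M = {0} \<or> M = DL 1 f \<or> M = DL 2 f \<or> M = Dcar f"
proof -
  have L1: "DL 1 f \<subseteq> M" if "d \<in> M" "d 1 i \<noteq> 0" for d i
    using line_in[OF f1 sm st, of 1 d i] that a0 ab by simp
  have L2: "DL 2 f \<subseteq> M" if "d \<in> M" "d 2 i \<noteq> 0" for d i
  proof -
    have "b ^ f \<noteq> a ^ f" using ab by metis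
    then show ?thesis using line_in[OF f1 sm st, of 2 d i] that b0 by simp
  qed
  have MD: "M \<subseteq> Dcar f" using sm by (simp add: submod_def)
  have z: "0 \<in> M" using sm by (simp add: submod_def)
  show ?thesis
  proof (cases "\<exists>d\<in>M. \<exists>i. d 1 i \<noteq> 0")
    case True
    then have S1: "DL 1 f \<subseteq> M" using L1 by blast
    show ?thesis
    proof (cases "\<exists>d\<in>M. \<exists>i. d 2 i \<noteq> 0")
      case True
      then have S2: "DL 2 f \<subseteq> M" using L2 by blast
      have "Dcar f \<subseteq> M"
      proof
        fix d :: "'a vec2" assume d: "d \<in> Dcar f"
        have "(\<lambda>t j. if t = 1 then d t j else 0) + (\<lambda>t j. if t = 2 then d t j else 0) \<in> M"
          using Dcar_split[OF d] S1 S2 by (intro submod_add[OF sm]) auto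
        then show "d \<in> M" using Dcar_split(1)[OF d] by simp
      qed
      then show ?thesis using MD by blast
    next
      case False
      have "M \<subseteq> DL 1 f"
      proof
        fix d assume "d \<in> M"
        then have "d \<in> Dcar f" "\<forall>j. d 2 j = 0" using MD False by auto
        then show "d \<in> DL 1 f" by (simp add: DL_def)
      qed
      then show ?thesis using S1 by blast
    qed
  next
    case False
    note F1 = False
    show ?thesis
    proof (cases "\<exists>d\<in>M. \<exists>i. d 2 i \<noteq> 0")
      case True
      then have S2: "DL 2 f \<subseteq> M" using L2 by blast
      have "M \<subseteq> DL 2 f"
      proof
        fix d assume "d \<in> M"
        then have "d \<in> Dcar f" "\<forall>j. d 1 j = 0" using MD F1 by auto
        then show "d \<in> DL 2 f" by (simp add: DL_def)
      qed
      then show ?thesis using S2 by blast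
    next
      case False
      have "M \<subseteq> {0}"
      proof
        fix d assume d: "d \<in> M"
        have h1: "\<forall>j. d 1 j = 0" using d F1 by auto
        have h2: "\<forall>j. d 2 j = 0" using d False by auto
        have h3: "d \<in> Dcar f" using d MD by auto
        have "d = 0"
        proof (rule ext, rule ext)
          fix t j show "d t j = 0 t j"
            using h1 h2 Dcar_zero[OF h3, of t j] by (cases "t = 1"; cases "t = 2") auto
        qed
        then show "d \<in> {0}" by simp
      qed
      then show ?thesis using z by blast
    qed
  qed
qed

lemma succ_pred_mod:
  assumes "(a::nat) < f"
  shows "((a + 1) mod f + f - 1) mod f = a" and "((a + f - 1) mod f + 1) mod f = a"
proof -
  show "((a + 1) mod f + f - 1) mod f = a"
  proof (cases "a + 1 < f")
    case True
    then have "(a + 1) mod f = a + 1" by (rule mod_less)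
    then have "(a + 1) mod f + f - 1 = a + f" by linarith
    moreover have "(a + f) mod f = a" using assms by simp
    ultimately show ?thesis by simp
  next
    case False
    then have e: "a + 1 = f" using assms by linarith
    then have "(a + 1) mod f = 0" by simp
    then have "(a + 1) mod f + f - 1 = a" using e by linarith
    then show ?thesis using assms by simp
  qed
  show "((a + f - 1) mod f + 1) mod f = a"
  proof (cases "a = 0")
    case True
    have "a + f - 1 < f" using assms True by linarith
    then have "(a + f - 1) mod f = a + f - 1" by (rule mod_less)
    then have "(a + f - 1) mod f + 1 = f" using True assms by linarith
    then show ?thesis using True by simp
  next
    case False
    then have "a + f - 1 = (a - 1) + f" using assms by linarith
    moreover have "((a - 1) + f) mod f = a - 1" using assms by simp
    ultimately have "(a + f - 1) mod f = a - 1" by simp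
    then have "(a + f - 1) mod f + 1 = a" using False by linarith
    then show ?thesis using assms by simp
  qed
qed

lemma prod_shift:
  fixes g :: "nat \<Rightarrow> 'a::comm_monoid_mult"
  shows "(\<Prod>i<f. g ((i + 1) mod f)) = (\<Prod>i<f. g i)"
proof (rule prod.reindex_bij_witness[where j = "\<lambda>a. (a + 1) mod f" and i = "\<lambda>b. (b + f - 1) mod f"])
  fix a assume "a \<in> {..<f}"
  then show "((a + 1) mod f + f - 1) mod f = a" "(a + 1) mod f \<in> {..<f}" "g ((a + 1) mod f) = g ((a + 1) mod f)"
    using succ_pred_mod by auto
next
  fix b assume "b \<in> {..<f}"
  then show "((b + f - 1) mod f + 1) mod f = b" "(b + f - 1) mod f \<in> {..<f}"
    using succ_pred_mod by auto
qed

lemma cyc_prod: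
  fixes g a :: "nat \<Rightarrow> 'a::field"
  assumes h: "\<forall>i<f. a i * g i = c * g ((i + 1) mod f)" and g0: "\<forall>i<f. g i \<noteq> 0"
  shows "(\<Prod>i<f. a i) = c ^ f"
proof -
  have "(\<Prod>i<f. a i) * (\<Prod>i<f. g i) = (\<Prod>i<f. a i * g i)" by (simp add: prod.distrib)
  also have "\<dots> = (\<Prod>i<f. c * g ((i + 1) mod f))" using h by (intro prod.cong) auto
  also have "\<dots> = c ^ f * (\<Prod>i<f. g ((i + 1) mod f))" by (simp add: prod.distrib)
  also have "\<dots> = c ^ f * (\<Prod>i<f. g i)" by (simp only: prod_shift)
  finally have eq: "(\<Prod>i<f. a i) * (\<Prod>i<f. g i) = c ^ f * (\<Prod>i<f. g i)" .
  have nz: "(\<Prod>i<f. g i) \<noteq> 0" using g0 by (simp add: prod_zero_iff)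
  show ?thesis using mult_right_cancel[OF nz] eq by blast
qed

lemma det1: "det (mat 1 1 g) = (g (0,0) :: 'a::comm_ring_1)"
  by (subst laplace_expansion_column[of _ 1 0]) (auto simp: cofactor_def det_def mat_delete_def)
lemma det2: "det (mat 2 2 g) = (g (0,0) * g (1,1) - g (0,1) * g (1,0) :: 'a::comm_ring_1)"
  apply (subst laplace_expansion_column[of _ 2 0])
  apply (auto simp: cofactor_def numeral_2_eq_2 lessThan_Suc)
  apply (subst (1 2) laplace_expansion_column[of _ 1 0])
  apply (auto simp: cofactor_def mat_delete_def det_def insert_index_def)
  done
lemma det0: "det (mat 0 0 g) = (1 :: 'a::comm_ring_1)"
  by (rule det_dim_zero) simp


lemma tN_eq:
  assumes ex: "\<exists>r w A. is_free_basis f M r w \<and> is_phi_matrix f a b r w A"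
    and all: "\<And>r w A. is_free_basis f M r w \<Longrightarrow> is_phi_matrix f a b r w A \<Longrightarrow>
       (\<Prod>i<f. det (mat r r (\<lambda>(k, l). A k l i))) = Q"
  shows "tN v f e a b M = real e * v Q"
proof -
  define P where "P = (\<lambda>(r, w, A). is_free_basis f M r w \<and> is_phi_matrix f a b r w A)"
  have "\<exists>x. P x" using ex unfolding P_def by auto
  then have "P (SOME x. P x)" by (rule someI_ex)
  then obtain r w A where e: "(SOME x. P x) = (r, w, A)" and B: "is_free_basis f M r w" and Ph: "is_phi_matrix f a b r w A"
    unfolding P_def by (cases "SOME x. P x") auto
  have "(\<Prod>i<f. det (mat r r (\<lambda>(k, l). A k l i))) = Q" using all[OF B Ph] .
  then show ?thesis unfolding tN_def using e unfolding P_def by simp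
qed

lemma sum_smul_apply: "(\<Sum>l<r. smul (c l) (w l)) t j = (\<Sum>l<r. c l j * w l t j)"
  by (simp add: sum_vec2 smul_def)

lemma basis_indep:
  assumes B: "is_free_basis f M r w" and z: "(0::'a::comm_ring_1 vec2) \<in> M"
    and c: "\<forall>l i. (r \<le> l \<or> f \<le> i) \<longrightarrow> c l i = 0"
    and s: "(\<Sum>l<r. smul (c l) (w l)) = 0"
  shows "c l i = 0"
proof -
  define Q where "Q = (\<lambda>c. (\<forall>l i. (r \<le> l \<or> f \<le> i) \<longrightarrow> c l i = 0) \<and> (0::'a vec2) = (\<Sum>l<r. smul (c l) (w l)))"
  have ex1: "\<exists>!c. Q c"
    using B z unfolding is_free_basis_def Q_def by blast
  then obtain x where hx: "\<forall>y. Q y \<longrightarrow> y = x" unfolding Ex1_def by blast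
  have s0: "(0::'a vec2) = (\<Sum>l<r. smul ((\<lambda>l i. 0) l) (w l))"
    by (rule ext, rule ext) (simp add: sum_smul_apply)
  have "Q (\<lambda>l i. 0)" unfolding Q_def using s0 by simp
  moreover have "Q c" unfolding Q_def using c s by simp
  ultimately have "c = (\<lambda>l i. 0)" using hx by metis
  then show ?thesis by simp
qed

lemma sum_two: fixes g :: "nat \<Rightarrow> 'a::comm_monoid_add" shows "2 \<le> r \<Longrightarrow> (\<forall>l. 2 \<le> l \<longrightarrow> g l = 0) \<Longrightarrow> (\<Sum>l<r. g l) = g 0 + (g 1 :: 'a::comm_monoid_add)"
proof -
  assume r: "2 \<le> r" and g: "\<forall>l. 2 \<le> l \<longrightarrow> g l = 0"
  have "(\<Sum>l<r. g l) = (\<Sum>l\<in>{0,1}. g l)"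
    using r g by (intro sum.mono_neutral_right) auto
  then show ?thesis by simp
qed

lemma sum_three: fixes g :: "nat \<Rightarrow> 'a::comm_monoid_add" shows "3 \<le> r \<Longrightarrow> (\<forall>l. 3 \<le> l \<longrightarrow> g l = 0) \<Longrightarrow> (\<Sum>l<r. g l) = g 0 + g 1 + (g 2 :: 'a::comm_monoid_add)"
proof -
  assume r: "3 \<le> r" and g: "\<forall>l. 3 \<le> l \<longrightarrow> g l = 0"
  have "(\<Sum>l<r. g l) = (\<Sum>l\<in>{0,1,2}. g l)"
    using r g by (intro sum.mono_neutral_right) auto
  then show ?thesis by (simp add: add.assoc)
qed

lemma sum_one: "(\<Sum>l<Suc 0. g l) = g 0" by simp

lemma DL_other: "d \<in> DL t n \<Longrightarrow> t \<in> {1,2} \<Longrightarrow> t' \<noteq> t \<Longrightarrow> d t' j = 0"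
  by (cases "t' = 3 - t") (auto simp: DL_def Dcar_def)

lemma DL_zero: "(0::'a::zero vec2) \<in> DL t n" by (simp add: DL_def Dcar_def)

lemma ones_DL: "t \<in> {1,2} \<Longrightarrow> ones t n \<in> DL t n"
  by (auto simp: DL_def Dcar_def ones_def)
lemma unitv_DL: "t \<in> {1,2} \<Longrightarrow> i < n \<Longrightarrow> unitv t i \<in> DL t n"
  by (auto simp: DL_def Dcar_def unitv_def)

lemma dep2: "\<exists>p q. (p, q) \<noteq> (0, 0) \<and> p * x + q * y = (0::'a::comm_ring_1)"
proof (cases "x = 0 \<and> y = 0")
  case True then show ?thesis by (intro exI[of _ 1] exI[of _ 0]) simp
next
  case False then show ?thesis by (intro exI[of _ y] exI[of _ "- x"]) (auto simp: algebra_simps)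
qed

lemma DL_basis:
  fixes a b :: "'a::field"
  assumes f1: "1 \<le> f" and t: "t \<in> {1,2}" and B: "is_free_basis f (DL t f) r w"
    and P: "is_phi_matrix f a b r w A"
  shows "(\<Prod>i<f. det (mat r r (\<lambda>(k, l). A k l i))) = lam a b t ^ f"
proof -
  have z: "(0::'a vec2) \<in> DL t f" by (rule DL_zero)
  have wDL: "w l \<in> DL t f" if "l < r" for l using B that by (simp add: is_free_basis_def)
  have rep: "\<exists>c. (\<forall>l i. (r \<le> l \<or> f \<le> i) \<longrightarrow> c l i = 0) \<and> d = (\<Sum>l<r. smul (c l) (w l))"
    if "d \<in> DL t f" for d using B that unfolding is_free_basis_def by blast
  have r0: "r \<noteq> 0"
  proof
    assume "r = 0"
    with rep[OF ones_DL[OF t, of f]] have "ones t f = (0::'a vec2)" by auto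
    then have "ones t f t 0 = (0::'a)" by simp
    then show False using f1 by (simp add: ones_def)
  qed
  have r2: "\<not> 2 \<le> r"
  proof
    assume r2: "2 \<le> r"
    obtain p q where pq: "(p, q) \<noteq> (0, 0)" "p * w 0 t 0 + q * w 1 t 0 = 0"
      using dep2 by blast
    define c :: "nat \<Rightarrow> nat \<Rightarrow> 'a" where "c = (\<lambda>l i. if i = 0 \<and> l = 0 then p else if i = 0 \<and> l = 1 then q else (0::'a))"
    have cz: "\<forall>l i. (r \<le> l \<or> f \<le> i) \<longrightarrow> c l i = 0" using r2 f1 by (auto simp: c_def)
    have s: "(\<Sum>l<r. smul (c l) (w l)) = 0"
    proof (rule ext, rule ext)
      fix t' j
      have "(\<Sum>l<r. smul (c l) (w l)) t' j = c 0 j * w 0 t' j + c 1 j * w 1 t' j"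
        unfolding sum_smul_apply using r2 by (intro sum_two) (auto simp: c_def)
      also have "\<dots> = 0"
      proof (cases "j = 0")
        case False then show ?thesis by (simp add: c_def)
      next
        case True
        show ?thesis
        proof (cases "t' = t")
          case True then show ?thesis using pq \<open>j = 0\<close> by (simp add: c_def)
        next
          case False
          then have "w 0 t' j = 0" "w 1 t' j = 0" using DL_other[OF wDL t] r2 by auto
          then show ?thesis by simp
        qed
      qed
      finally show "(\<Sum>l<r. smul (c l) (w l)) t' j = 0 t' j" by simp
    qed
    have "c 0 0 = 0" "c 1 0 = 0" using basis_indep[OF B z cz s] by auto
    then show False using pq by (simp add: c_def)
  qed
  have r1: "r = 1" using r0 r2 by simp
  have wnz: "w 0 t i \<noteq> 0" if i: "i < f" for i
  proof
    assume w0: "w 0 t i = 0"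
    obtain c where "unitv t i = (\<Sum>l<r. smul (c l) (w l))" using rep[OF unitv_DL[OF t i]] by blast
    then have "unitv t i t i = (\<Sum>l<r. smul (c l) (w l)) t i" by simp
    then show False using w0 r1 by (simp add: sum_smul_apply unitv_def smul_def)
  qed
  have ph: "phiD f a b (w 0) = smul (A 0 0) (w 0)"
    using P r1 unfolding is_phi_matrix_def by auto
  have rel: "\<forall>i<f. A 0 0 i * w 0 t i = lam a b t * w 0 t ((i + 1) mod f)"
  proof (intro allI impI)
    fix i assume i: "i < f"
    have "phiD f a b (w 0) t i = smul (A 0 0) (w 0) t i" using ph by simp
    then show "A 0 0 i * w 0 t i = lam a b t * w 0 t ((i + 1) mod f)"
      using i by (simp add: phiD_eq smul_def)
  qed
  have "(\<Prod>i<f. A 0 0 i) = lam a b t ^ f"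
    using rel wnz by (intro cyc_prod) auto
  then show ?thesis unfolding r1 det1 by simp
qed

lemma DL_exists:
  fixes a b :: "'a::field"
  assumes t: "t \<in> {1,2}" and l0: "lam a b t \<noteq> 0"
  shows "\<exists>r w A. is_free_basis f (DL t f) r w \<and> is_phi_matrix f a b r w A"
proof (intro exI conjI)
  let ?w = "\<lambda>_::nat. ones t f :: 'a vec2"
  let ?A = "\<lambda>(k::nat) (l::nat) (i::nat). if k = 0 \<and> l = 0 \<and> i < f then lam a b t else 0"
  show "is_free_basis f (DL t f) 1 ?w"
    unfolding is_free_basis_def
  proof (intro conjI ballI allI impI)
    show "\<And>l. l < 1 \<Longrightarrow> (ones t f :: 'a vec2) \<in> DL t f" using ones_DL[OF t] by blast
    fix d :: "'a vec2" assume d: "d \<in> DL t f"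
    let ?c = "\<lambda>(l::nat) (i::nat). if l = 0 \<and> i < f then d t i else 0"
    show "\<exists>!c. (\<forall>l i. (1 \<le> l \<or> f \<le> i) \<longrightarrow> c l i = 0) \<and> d = (\<Sum>l<1. smul (c l) (?w l))"
    proof (rule ex1I[of _ ?c])
      show "(\<forall>l i. (1 \<le> l \<or> f \<le> i) \<longrightarrow> ?c l i = 0) \<and> d = (\<Sum>l<1. smul (?c l) (?w l))"
      proof (intro conjI allI impI)
        show "d = (\<Sum>l<1. smul (?c l) (?w l))"
        proof (rule ext, rule ext)
          fix t' j
          show "d t' j = (\<Sum>l<1. smul (?c l) (?w l)) t' j"
          proof (cases "t' = t")
            case True then show ?thesis using d by (auto simp: smul_def ones_def DL_def Dcar_def)
          next
            case False then show ?thesis using DL_other[OF d t False] by (simp add: smul_def ones_def)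
          qed
        qed
      qed auto
      fix c assume c: "(\<forall>l i. (1 \<le> l \<or> f \<le> i) \<longrightarrow> c l i = 0) \<and> d = (\<Sum>l<1. smul (c l) (?w l))"
      show "c = ?c"
      proof (rule ext, rule ext)
        fix l i
        show "c l i = ?c l i"
        proof (cases "l = 0 \<and> i < f")
          case True
          have "d t i = (\<Sum>l<1. smul (c l) (?w l)) t i" using c by simp
          then show ?thesis using True by (simp add: smul_def ones_def)
        next
          case False then show ?thesis using c by auto
        qed
      qed
    qed
  qed
  show "is_phi_matrix f a b 1 ?w ?A"
    unfolding is_phi_matrix_def
  proof (intro conjI allI impI)
    show "\<And>k l i. 1 \<le> k \<or> 1 \<le> l \<or> f \<le> i \<Longrightarrow> ?A k l i = 0" by auto
    show "\<And>i. i < f \<Longrightarrow> det (mat 1 1 (\<lambda>(k, l). ?A k l i)) \<noteq> 0" unfolding det1 using l0 by simp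
    fix l :: nat assume "l < 1"
    then have l: "l = 0" by simp
    show "phiD f a b (?w l) = (\<Sum>k<1. smul (?A k l) (?w k))"
    proof (rule ext, rule ext)
      fix t' j
      show "phiD f a b (?w l) t' j = (\<Sum>k<1. smul (?A k l) (?w k)) t' j"
        using l by (cases "t' = t") (auto simp: phiD_eq smul_def ones_def)
    qed
  qed
qed

lemma zero_basis:
  fixes a b :: "'a::field"
  assumes f1: "1 \<le> f" and B: "is_free_basis f {0::'a vec2} r w"
  shows "(\<Prod>i<f. det (mat r r (\<lambda>(k, l). A k l i))) = 1"
proof -
  have r0: "r = 0"
  proof (rule ccontr)
    assume r: "r \<noteq> 0"
    define c :: "nat \<Rightarrow> nat \<Rightarrow> 'a" where "c = (\<lambda>l i. if l = 0 \<and> i = 0 then 1 else 0)"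
    have cz: "\<forall>l i. (r \<le> l \<or> f \<le> i) \<longrightarrow> c l i = 0" using r f1 by (auto simp: c_def)
    have w0: "w l = 0" if "l < r" for l using B that by (simp add: is_free_basis_def)
    have s: "(\<Sum>l<r. smul (c l) (w l)) = 0"
      by (rule ext, rule ext) (simp add: sum_smul_apply w0)
    have "c 0 0 = 0" using basis_indep[OF B _ cz s] by simp
    then show False by (simp add: c_def)
  qed
  show ?thesis unfolding r0 det0 by simp
qed

lemma zero_exists:
  fixes a b :: "'a::field"
  shows "\<exists>r w A. is_free_basis f {0::'a vec2} r w \<and> is_phi_matrix f a b r w A"
proof (intro exI conjI)
  show "is_free_basis f {0::'a vec2} 0 (\<lambda>_. 0)"
    unfolding is_free_basis_def
  proof (intro conjI ballI allI impI)
    fix d :: "'a vec2" assume "d \<in> {0}"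
    then have d: "d = 0" by simp
    show "\<exists>!c. (\<forall>(l::nat) i. (0 \<le> l \<or> f \<le> i) \<longrightarrow> c l i = 0) \<and> d = (\<Sum>l<0. smul (c l) ((\<lambda>_. 0) l))"
      by (rule ex1I[of _ "\<lambda>l i. 0"]) (auto simp: d smul_def fun_eq_iff)
  qed auto
  show "is_phi_matrix f a b 0 (\<lambda>_. 0) (\<lambda>_ _ _. 0)"
    unfolding is_phi_matrix_def by (simp add: det0)
qed

lemma dep2v:
  fixes x1 x2 y1 y2 :: "'a::comm_ring_1"
  assumes "x1 * y2 - x2 * y1 = 0"
  shows "\<exists>p q. (p, q) \<noteq> (0, 0) \<and> p * x1 + q * y1 = 0 \<and> p * x2 + q * y2 = 0"
proof (cases "x1 = 0 \<and> x2 = 0")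
  case True then show ?thesis by (intro exI[of _ 1] exI[of _ 0]) simp
next
  case False
  show ?thesis
  proof (cases "x1 = 0")
    case False
    then show ?thesis using assms
      by (intro exI[of _ "- y1"] exI[of _ x1]) (auto simp: algebra_simps)
  next
    case True
    then have "x2 \<noteq> 0" using \<open>\<not> (x1 = 0 \<and> x2 = 0)\<close> by simp
    then show ?thesis using assms True
      by (intro exI[of _ "- y2"] exI[of _ x2]) (auto simp: algebra_simps)
  qed
qed

lemma dep3:
  fixes x1 x2 y1 y2 z1 z2 :: "'a::comm_ring_1"
  shows "\<exists>p q s. (p, q, s) \<noteq> (0, 0, 0) \<and> p * x1 + q * y1 + s * z1 = 0 \<and> p * x2 + q * y2 + s * z2 = 0"
proof (cases "x1 * y2 - x2 * y1 = 0")
  case True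
  then obtain p q where "(p, q) \<noteq> (0, 0)" "p * x1 + q * y1 = 0" "p * x2 + q * y2 = 0"
    using dep2v by blast
  then show ?thesis by (intro exI[of _ p] exI[of _ q] exI[of _ 0]) auto
next
  case False
  show ?thesis
    apply (rule exI[of _ "y1 * z2 - y2 * z1"], rule exI[of _ "- (x1 * z2 - x2 * z1)"], rule exI[of _ "x1 * y2 - x2 * y1"])
    using False by (auto simp: algebra_simps)
qed

lemma ones_Dcar: "t \<in> {1,2} \<Longrightarrow> ones t n \<in> Dcar n"
  by (auto simp: Dcar_def ones_def)
lemma unitv_Dcar: "t \<in> {1,2} \<Longrightarrow> i < n \<Longrightarrow> unitv t i \<in> Dcar n"
  by (auto simp: Dcar_def unitv_def)
lemma zero_Dcar: "(0::'a::zero vec2) \<in> Dcar n" by (simp add: Dcar_def)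

lemma sum2: fixes g :: "nat \<Rightarrow> 'a::comm_monoid_add" shows "(\<Sum>l<2. g l) = g 0 + (g 1 :: 'a::comm_monoid_add)"
  by (simp add: numeral_2_eq_2)

lemma Dcar_basis:
  fixes a b :: "'a::field"
  assumes f1: "1 \<le> f" and B: "is_free_basis f (Dcar f) r w"
    and P: "is_phi_matrix f a b r w A"
  shows "(\<Prod>i<f. det (mat r r (\<lambda>(k, l). A k l i))) = (a * b) ^ f"
proof -
  have z: "(0::'a vec2) \<in> Dcar f" by (rule zero_Dcar)
  have wD: "w l \<in> Dcar f" if "l < r" for l using B that by (simp add: is_free_basis_def)
  have rep: "\<exists>c. (\<forall>l i. (r \<le> l \<or> f \<le> i) \<longrightarrow> c l i = 0) \<and> d = (\<Sum>l<r. smul (c l) (w l))"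
    if "d \<in> Dcar f" for d using B that unfolding is_free_basis_def by blast
  have r0: "r \<noteq> 0"
  proof
    assume "r = 0"
    with rep[OF ones_Dcar[of 1 f]] have "ones 1 f = (0::'a vec2)" by auto
    then have "ones 1 f 1 0 = (0::'a)" by simp
    then show False using f1 by (simp add: ones_def)
  qed
  have r1: "r \<noteq> 1"
  proof
    assume r1: "r = 1"
    obtain c where c: "unitv 1 0 = (\<Sum>l<r. smul (c l) (w l))" using rep[OF unitv_Dcar[of 1 0 f]] f1 by auto
    obtain c' where c': "unitv 2 0 = (\<Sum>l<r. smul (c' l) (w l))" using rep[OF unitv_Dcar[of 2 0 f]] f1 by auto
    have e1: "c 0 0 * w 0 1 0 = 1" "c 0 0 * w 0 2 0 = 0"
      using fun_cong[OF fun_cong[OF c, of 1], of 0] fun_cong[OF fun_cong[OF c, of 2], of 0] r1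
      by (simp_all add: sum_smul_apply unitv_def smul_def)
    have e2: "c' 0 0 * w 0 2 0 = 1"
      using fun_cong[OF fun_cong[OF c', of 2], of 0] r1
      by (simp_all add: sum_smul_apply unitv_def smul_def)
    from e1 have "c 0 0 \<noteq> 0" by auto
    with e1 have "w 0 2 0 = 0" by simp
    with e2 show False by simp
  qed
  have r3: "\<not> 3 \<le> r"
  proof
    assume r3: "3 \<le> r"
    obtain p q s where pqs: "(p, q, s) \<noteq> (0, 0, 0)"
      "p * w 0 1 0 + q * w 1 1 0 + s * w 2 1 0 = 0" "p * w 0 2 0 + q * w 1 2 0 + s * w 2 2 0 = 0"
      using dep3 by blast
    define c :: "nat \<Rightarrow> nat \<Rightarrow> 'a" where
      "c = (\<lambda>l i. if i = 0 then (if l = 0 then p else if l = 1 then q else if l = 2 then s else 0) else 0)"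
    have cz: "\<forall>l i. (r \<le> l \<or> f \<le> i) \<longrightarrow> c l i = 0" using r3 f1 by (auto simp: c_def)
    have sm: "(\<Sum>l<r. smul (c l) (w l)) = 0"
    proof (rule ext, rule ext)
      fix t' j
      have "(\<Sum>l<r. smul (c l) (w l)) t' j = c 0 j * w 0 t' j + c 1 j * w 1 t' j + c 2 j * w 2 t' j"
        unfolding sum_smul_apply using r3 by (intro sum_three) (auto simp: c_def)
      also have "\<dots> = 0"
      proof (cases "j = 0")
        case False then show ?thesis by (simp add: c_def)
      next
        case True
        show ?thesis
        proof (cases "t' = 1 \<or> t' = 2")
          case True then show ?thesis using pqs \<open>j = 0\<close> by (auto simp: c_def)
        next
          case False
          then have "w 0 t' j = 0" "w 1 t' j = 0" "w 2 t' j = 0"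
            using Dcar_zero[OF wD] r3 by auto
          then show ?thesis by simp
        qed
      qed
      finally show "(\<Sum>l<r. smul (c l) (w l)) t' j = 0 t' j" by simp
    qed
    have "c 0 0 = 0" "c 1 0 = 0" "c 2 0 = 0" using basis_indep[OF B z cz sm] by auto
    then show False using pqs by (simp add: c_def)
  qed
  have r2: "r = 2" using r0 r1 r3 by simp
  define dW where "dW = (\<lambda>i. w 0 1 i * w 1 2 i - w 0 2 i * w 1 1 i)"
  have dWnz: "dW i \<noteq> 0" if i: "i < f" for i
  proof
    assume h: "dW i = 0"
    obtain p q where pq: "(p, q) \<noteq> (0, 0)" "p * w 0 1 i + q * w 1 1 i = 0" "p * w 0 2 i + q * w 1 2 i = 0"
      using dep2v[of "w 0 1 i" "w 1 2 i" "w 0 2 i" "w 1 1 i"] h by (auto simp: dW_def)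
    define c :: "nat \<Rightarrow> nat \<Rightarrow> 'a" where
      "c = (\<lambda>l j. if j = i then (if l = 0 then p else if l = 1 then q else 0) else 0)"
    have cz: "\<forall>l j. (r \<le> l \<or> f \<le> j) \<longrightarrow> c l j = 0" using r2 i by (auto simp: c_def)
    have sm: "(\<Sum>l<r. smul (c l) (w l)) = 0"
    proof (rule ext, rule ext)
      fix t' j
      have "(\<Sum>l<r. smul (c l) (w l)) t' j = c 0 j * w 0 t' j + c 1 j * w 1 t' j"
        unfolding sum_smul_apply r2 sum2 by (simp add: smul_def)
      also have "\<dots> = 0"
      proof (cases "j = i")
        case False then show ?thesis by (simp add: c_def)
      next
        case True
        show ?thesis
        proof (cases "t' = 1 \<or> t' = 2")
          case True then show ?thesis using pq \<open>j = i\<close> by (auto simp: c_def)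
        next
          case False
          then have "w 0 t' j = 0" "w 1 t' j = 0"
            using Dcar_zero[OF wD] r2 by auto
          then show ?thesis by simp
        qed
      qed
      finally show "(\<Sum>l<r. smul (c l) (w l)) t' j = 0 t' j" by simp
    qed
    have "c 0 i = 0" "c 1 i = 0" using basis_indep[OF B z cz sm] by auto
    then show False using pq by (simp add: c_def)
  qed
  have ph: "phiD f a b (w l) = smul (A 0 l) (w 0) + smul (A 1 l) (w 1)" if "l < 2" for l
  proof -
    have "phiD f a b (w l) = (\<Sum>k<2. smul (A k l) (w k))"
      using P r2 that unfolding is_phi_matrix_def by auto
    also have "\<dots> = smul (A 0 l) (w 0) + smul (A 1 l) (w 1)" by (rule sum2)
    finally show ?thesis .
  qed
  have rel: "lam a b t * w l t ((i + 1) mod f) = A 0 l i * w 0 t i + A 1 l i * w 1 t i"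
    if "l < 2" "i < f" for l t i
  proof -
    have "phiD f a b (w l) t i = (smul (A 0 l) (w 0) + smul (A 1 l) (w 1)) t i"
      using ph[OF that(1)] by simp
    then show ?thesis using that(2) by (simp add: phiD_eq smul_def)
  qed
  have key: "det (mat 2 2 (\<lambda>(k, l). A k l i)) * dW i = (a * b) * dW ((i + 1) mod f)"
    if i: "i < f" for i
  proof -
    let ?j = "(i + 1) mod f"
    have R: "a * w 0 1 ?j = A 0 0 i * w 0 1 i + A 1 0 i * w 1 1 i"
            "a * w 1 1 ?j = A 0 1 i * w 0 1 i + A 1 1 i * w 1 1 i"
            "b * w 0 2 ?j = A 0 0 i * w 0 2 i + A 1 0 i * w 1 2 i"
            "b * w 1 2 ?j = A 0 1 i * w 0 2 i + A 1 1 i * w 1 2 i"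
      using rel[of 0 i 1] rel[of 1 i 1] rel[of 0 i 2] rel[of 1 i 2] i by simp_all
    have "(a * b) * dW ?j = (a * w 0 1 ?j) * (b * w 1 2 ?j) - (b * w 0 2 ?j) * (a * w 1 1 ?j)"
      by (simp add: dW_def algebra_simps)
    also have "\<dots> = (A 0 0 i * w 0 1 i + A 1 0 i * w 1 1 i) * (A 0 1 i * w 0 2 i + A 1 1 i * w 1 2 i)
        - (A 0 0 i * w 0 2 i + A 1 0 i * w 1 2 i) * (A 0 1 i * w 0 1 i + A 1 1 i * w 1 1 i)"
      by (simp only: R)
    also have "\<dots> = det (mat 2 2 (\<lambda>(k, l). A k l i)) * dW i"
      by (simp add: det2 dW_def algebra_simps)
    finally show ?thesis by simp
  qed
  have "(\<Prod>i<f. det (mat 2 2 (\<lambda>(k, l). A k l i))) = (a * b) ^ f"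
    using key dWnz by (intro cyc_prod) auto
  then show ?thesis using r2 by simp
qed

lemma Dcar_exists:
  fixes a b :: "'a::field"
  assumes a0: "a \<noteq> 0" and b0: "b \<noteq> 0"
  shows "\<exists>r w A. is_free_basis f (Dcar f) r w \<and> is_phi_matrix f a b r w A"
proof (intro exI conjI)
  let ?w = "\<lambda>l::nat. ones (l + 1) f :: 'a vec2"
  let ?A = "\<lambda>(k::nat) (l::nat) (i::nat). if k = l \<and> k < 2 \<and> i < f then lam a b (k + 1) else 0"
  show "is_free_basis f (Dcar f) 2 ?w"
    unfolding is_free_basis_def
  proof (intro conjI ballI allI impI)
    show "\<And>l. l < 2 \<Longrightarrow> ?w l \<in> Dcar f"
    proof -
      fix l :: nat assume "l < 2"
      then have "l + 1 \<in> {1,2}" by auto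
      then show "?w l \<in> Dcar f" by (rule ones_Dcar)
    qed
    fix d :: "'a vec2" assume d: "d \<in> Dcar f"
    let ?c = "\<lambda>(l::nat) (i::nat). if l < 2 \<and> i < f then d (l + 1) i else 0"
    show "\<exists>!c. (\<forall>l i. (2 \<le> l \<or> f \<le> i) \<longrightarrow> c l i = 0) \<and> d = (\<Sum>l<2. smul (c l) (?w l))"
    proof (rule ex1I[of _ ?c])
      show "(\<forall>l i. (2 \<le> l \<or> f \<le> i) \<longrightarrow> ?c l i = 0) \<and> d = (\<Sum>l<2. smul (?c l) (?w l))"
      proof (intro conjI allI impI)
        show "d = (\<Sum>l<2. smul (?c l) (?w l))"
        proof (rule ext, rule ext)
          fix t' j
          show "d t' j = (\<Sum>l<2. smul (?c l) (?w l)) t' j"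
            unfolding sum2 using Dcar_zero[OF d, of t' j]
            by (cases "t' = 1"; cases "t' = 2") (auto simp: smul_def ones_def numeral_2_eq_2)
        qed
      qed auto
      fix c assume c: "(\<forall>l i. (2 \<le> l \<or> f \<le> i) \<longrightarrow> c l i = 0) \<and> d = (\<Sum>l<2. smul (c l) (?w l))"
      show "c = ?c"
      proof (rule ext, rule ext)
        fix l i
        show "c l i = ?c l i"
        proof (cases "l < 2 \<and> i < f")
          case True
          have "d (l + 1) i = (\<Sum>l<2. smul (c l) (?w l)) (l + 1) i" using c by simp
          from True have "l = 0 \<or> l = 1" by auto
          then show ?thesis using True \<open>d (l + 1) i = _\<close> unfolding sum2 by (elim disjE) (auto simp: smul_def ones_def)
        next
          case False then show ?thesis using c by auto
        qed
      qed
    qed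
  qed
  show "is_phi_matrix f a b 2 ?w ?A"
    unfolding is_phi_matrix_def
  proof (intro conjI allI impI)
    show "\<And>k l i. 2 \<le> k \<or> 2 \<le> l \<or> f \<le> i \<Longrightarrow> ?A k l i = 0" by auto
    show "\<And>i. i < f \<Longrightarrow> det (mat 2 2 (\<lambda>(k, l). ?A k l i)) \<noteq> 0"
      unfolding det2 using a0 b0 by (simp add: lam_def)
    fix l :: nat assume "l < 2"
    then have l: "l = 0 \<or> l = 1" by auto
    show "phiD f a b (?w l) = (\<Sum>k<2. smul (?A k l) (?w k))"
    proof (rule ext, rule ext)
      fix t' j
      show "phiD f a b (?w l) t' j = (\<Sum>k<2. smul (?A k l) (?w k)) t' j"
        unfolding sum2 using l by (cases "t' = 1"; cases "t' = 2") (auto simp: phiD_eq smul_def ones_def lam_def)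
    qed
  qed
qed


interpretation VS: vector_space "\<lambda>c (d::'a::field vec2) t u. c * d t u"
  by unfold_locales (auto simp: fun_eq_iff algebra_simps)

lemma Edim_VS: "Edim S = VS.dim S" by (simp add: Edim_def)

lemma dim_zero_set: "Edim {0::'a::field vec2} = 0"
  unfolding Edim_VS by (rule VS.dim_unique[of "{}"]) (auto simp: VS.independent_empty)

lemma dim_line:
  fixes u :: "'a::field vec2"
  assumes "u \<noteq> 0"
  shows "Edim (range (\<lambda>c. (\<lambda>t s. c * u t s))) = 1"
  unfolding Edim_VS
proof (rule VS.dim_unique[of "{u}"])
  show "{u} \<subseteq> range (\<lambda>c t s. c * u t s)" by (auto intro: range_eqI[of _ _ 1])
  show "range (\<lambda>c t s. c * u t s) \<subseteq> VS.span {u}" by (simp add: VS.span_singleton)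
  show "VS.independent {u}" using assms by (intro VS.independent_insertI) (auto simp: VS.independent_empty)
qed simp

definition plane :: "nat \<Rightarrow> 'a::zero vec2 set" where
  "plane s = {d. \<forall>t u. (t \<notin> {1,2} \<or> u \<noteq> s) \<longrightarrow> d t u = 0}"

lemma dim_plane: "Edim (plane s :: 'a::field vec2 set) = 2"
  unfolding Edim_VS
proof (rule VS.dim_unique[of "{unitv 1 s, unitv 2 s}"])
  show "{unitv 1 s, unitv 2 s} \<subseteq> (plane s :: 'a vec2 set)" by (auto simp: plane_def unitv_def)
  show "plane s \<subseteq> VS.span {unitv 1 s, unitv 2 s :: 'a vec2}"
  proof
    fix d :: "'a vec2" assume d: "d \<in> plane s"
    have "d = (\<lambda>t u. d 1 s * unitv 1 s t u) + (\<lambda>t u. d 2 s * unitv 2 s t u)"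
    proof (rule ext, rule ext)
      fix t u show "d t u = ((\<lambda>t u. d 1 s * unitv 1 s t u) + (\<lambda>t u. d 2 s * unitv 2 s t u)) t u"
        using d by (cases "t = 1"; cases "t = 2"; cases "u = s") (auto simp: plane_def unitv_def)
    qed
    moreover have "(\<lambda>t u. d 1 s * unitv 1 s t u) + (\<lambda>t u. d 2 s * unitv 2 s t u) \<in> VS.span {unitv 1 s, unitv 2 s :: 'a vec2}"
      by (intro VS.span_add VS.span_scale VS.span_base) auto
    ultimately show "d \<in> VS.span {unitv 1 s, unitv 2 s}" by simp
  qed
  show "VS.independent {unitv 1 s, unitv 2 s :: 'a vec2}"
  proof (rule VS.independent_insertI)
    show "unitv 1 s \<notin> VS.span {unitv 2 s :: 'a vec2}"
    proof
      assume "unitv 1 s \<in> VS.span {unitv 2 s :: 'a vec2}"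
      then obtain c where "unitv 1 s = (\<lambda>t u. c * (unitv 2 s :: 'a vec2) t u)" by (auto simp: VS.span_singleton)
      then have "unitv 1 s 1 s = c * (unitv 2 s :: 'a vec2) 1 s" by metis
      then show False by (simp add: unitv_def)
    qed
    show "VS.independent {unitv 2 s :: 'a vec2}"
      by (intro VS.independent_insertI) (auto simp: unitv_def fun_eq_iff VS.independent_empty)
  qed
  show "card {unitv 1 s, unitv 2 s :: 'a vec2} = 2"
  proof -
    have "unitv 1 s \<noteq> (unitv 2 s :: 'a vec2)" by (auto simp: unitv_def fun_eq_iff)
    then show ?thesis by simp
  qed
qed
lemma SumAny_step:
  fixes D :: "int \<Rightarrow> nat" and K :: int
  assumes K: "0 \<le> K" and D: "\<And>j. D j = (if j \<le> 0 then a else if j \<le> K then b else 0)"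
  shows "Sum_any (\<lambda>j::int. j * (int (D j) - int (D (j + 1)))) = K * int b"
proof -
  have eq: "(\<lambda>j::int. j * (int (D j) - int (D (j + 1)))) = (\<lambda>j. if j = K then K * int b else 0)"
  proof
    fix j :: int
    show "j * (int (D j) - int (D (j + 1))) = (if j = K then K * int b else 0)"
    proof (cases "j < 0")
      case True then show ?thesis using K by (simp add: D)
    next
      case False
      show ?thesis
      proof (cases "j = 0")
        case True then show ?thesis by simp
      next
        case False
        with \<open>\<not> j < 0\<close> have "0 < j" by simp
        then show ?thesis by (cases "j < K"; cases "j = K") (auto simp: D)
      qed
    qed
  qed
  have dl: "Sum_any (\<lambda>j::int. if j = K then K * int b else 0) = K * int b"
    using Sum_any.delta[of K "\<lambda>_. K * int b"] by simp
  show ?thesis by (simp only: eq dl)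
qed

lemma tH_calc:
  fixes F :: "int \<Rightarrow> 'a::field vec2 set" and A Bv :: "nat \<Rightarrow> nat"
  assumes k: "\<forall>s<m. 0 \<le> k s"
    and E: "\<And>s j. s < m \<Longrightarrow> Edim (eproj s ` F j) = (if j \<le> 0 then A s else if j \<le> k s then Bv s else 0)"
  shows "tH m F = (\<Sum>s<m. k s * int (Bv s))"
  unfolding tH_def
proof (rule sum.cong)
  fix s assume "s \<in> {..<m}"
  then have s: "s < m" by simp
  show "Sum_any (\<lambda>j. j * (int (Edim (eproj s ` F j)) - int (Edim (eproj s ` F (j + 1))))) = k s * int (Bv s)"
    using SumAny_step[of "k s" "\<lambda>j. Edim (eproj s ` F j)" "A s" "Bv s"] k s E[OF s] by simp
qed simp

definition xy :: "(nat \<Rightarrow> 'a) \<Rightarrow> (nat \<Rightarrow> 'a) \<Rightarrow> nat \<Rightarrow> nat \<Rightarrow> 'a::zero" where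
  "xy x y t s = (if t = 1 then x s else if t = 2 then y s else 0)"
definition xyv :: "(nat \<Rightarrow> 'a) \<Rightarrow> (nat \<Rightarrow> 'a) \<Rightarrow> nat \<Rightarrow> 'a::zero vec2" where
  "xyv x y s = (\<lambda>t u. if u = s then xy x y t s else 0)"
definition filv :: "nat \<Rightarrow> (nat \<Rightarrow> int) \<Rightarrow> (nat \<Rightarrow> 'a) \<Rightarrow> (nat \<Rightarrow> 'a) \<Rightarrow> int \<Rightarrow> (nat \<Rightarrow> 'a) \<Rightarrow> 'a::comm_ring_1 vec2" where
  "filv m k x y j c = (\<lambda>t s'. if s' < m \<and> j \<le> k s' then c s' * xy x y t s' else 0)"

lemma setcompr_range: "{d. \<exists>c. d = G c} = range G" by auto

lemma Fil_pos: "0 < j \<Longrightarrow> Fil m k x y j = range (filv m k x y j)"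
proof -
  assume j: "0 < j"
  have "filv m k x y j = (\<lambda>c t s. if s < m \<and> j \<le> k s then
                 c s * (if t = 1 then x s else if t = 2 then y s else 0) else 0)"
    by (simp add: filv_def xy_def fun_eq_iff)
  then show ?thesis using j unfolding Fil_def by (simp add: setcompr_range)
qed
lemma Fil_nonpos: "j \<le> 0 \<Longrightarrow> Fil m k x y j = Dcar m"
  by (simp add: Fil_def)

lemma eproj_filv: "eproj s (filv m k x y j c) = (if s < m \<and> j \<le> k s then (\<lambda>t u. c s * xyv x y s t u) else 0)"
  by (auto simp: eproj_def filv_def xyv_def fun_eq_iff)

lemma filv_Dcar: "filv m k x y j c \<in> Dcar m"
  by (auto simp: Dcar_def filv_def xy_def)

lemma xyv_nz: "x s \<noteq> 0 \<or> y s \<noteq> 0 \<Longrightarrow> xyv x y s \<noteq> (0::'a::zero vec2)"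
proof
  assume h: "x s \<noteq> 0 \<or> y s \<noteq> 0" and z: "xyv x y s = 0"
  have "xyv x y s 1 s = 0" "xyv x y s 2 s = 0" using z by simp_all
  then show False using h by (simp add: xyv_def xy_def)
qed

lemma unitv_nz: "unitv t s \<noteq> (0::'a::zero_neq_one vec2)"
proof
  assume "unitv t s = (0::'a vec2)"
  then have "unitv t s t s = (0::'a)" by simp
  then show False by (simp add: unitv_def)
qed

lemma img_Dcar_nonpos:
  assumes "s < m" "j \<le> 0"
  shows "eproj s ` (Dcar m \<inter> Fil m k x y j) = (plane s :: 'a::comm_ring_1 vec2 set)"
proof -
  have "eproj s ` (Dcar m :: 'a vec2 set) = (plane s :: 'a vec2 set)"
  proof (rule equalityI)
    show "eproj s ` (Dcar m :: 'a vec2 set) \<subseteq> plane s" by (auto simp: eproj_def plane_def Dcar_def)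
    show "plane s \<subseteq> eproj s ` (Dcar m :: 'a vec2 set)"
    proof
      fix d :: "'a vec2" assume d: "d \<in> plane s"
      have "d \<in> Dcar m" using d assms by (auto simp: plane_def Dcar_def)
      moreover have "eproj s d = d" using d by (auto simp: plane_def eproj_def fun_eq_iff)
      ultimately show "d \<in> eproj s ` (Dcar m :: 'a vec2 set)" by (metis image_eqI)
    qed
  qed
  then show ?thesis using assms by (simp add: Fil_nonpos)
qed

lemma img_Dcar_pos:
  assumes "s < m" "0 < j"
  shows "eproj s ` (Dcar m \<inter> Fil m k x y j) =
    (if j \<le> k s then range (\<lambda>c t u. c * xyv x y s t u) else {0::'a::comm_ring_1 vec2})"
proof -
  have "Dcar m \<inter> Fil m k x y j = range (filv m k x y j)"
    using assms filv_Dcar by (auto simp: Fil_pos)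
  moreover have "eproj s ` range (filv m k x y j) =
    (if j \<le> k s then range (\<lambda>c t u. c * xyv x y s t u) else {0::'a vec2})"
  proof (cases "j \<le> k s")
    case True
    have "eproj s ` range (filv m k x y j) = range (\<lambda>c t u. c * xyv x y s t u)"
    proof (rule equalityI)
      show "eproj s ` range (filv m k x y j) \<subseteq> range (\<lambda>c t u. c * xyv x y s t u)"
        using assms True by (auto simp: eproj_filv)
      show "range (\<lambda>c t u. c * xyv x y s t u) \<subseteq> eproj s ` range (filv m k x y j)"
      proof
        fix d :: "'a vec2" assume "d \<in> range (\<lambda>c t u. c * xyv x y s t u)"
        then obtain c0 where d: "d = (\<lambda>t u. c0 * xyv x y s t u)" by auto
        have "eproj s (filv m k x y j (\<lambda>_. c0)) = d" using assms True d by (simp add: eproj_filv)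
        then show "d \<in> eproj s ` range (filv m k x y j)" by (metis rangeI image_eqI)
      qed
    qed
    then show ?thesis using True by simp
  next
    case False
    have "eproj s (filv m k x y j (\<lambda>_. 0)) = (0::'a vec2)" using False by (simp add: eproj_filv)
    then have "(0::'a vec2) \<in> eproj s ` range (filv m k x y j)" by (metis rangeI image_eqI)
    then show ?thesis using False assms by (auto simp: eproj_filv)
  qed
  ultimately show ?thesis by simp
qed

lemma img_zero: "eproj s ` ({0} \<inter> Fil m k x y j) = {0::'a::comm_ring_1 vec2}"
proof -
  have "(0::'a vec2) \<in> Fil m k x y j"
  proof (cases "j \<le> 0")
    case True then show ?thesis by (simp add: Fil_nonpos Dcar_def)
  next
    case False
    then have "filv m k x y j (\<lambda>_. 0) = 0" "filv m k x y j (\<lambda>_. 0) \<in> Fil m k x y j"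
      by (auto simp: Fil_pos filv_def fun_eq_iff)
    then show ?thesis by metis
  qed
  then show ?thesis by (auto simp: eproj_def fun_eq_iff)
qed

lemma img_DL_nonpos:
  assumes "s < m" "j \<le> 0" "t \<in> {1,2}"
  shows "eproj s ` (DL t m \<inter> Fil m k x y j) = range (\<lambda>c t' u. c * (unitv t s :: 'a::comm_ring_1 vec2) t' u)"
proof -
  have "eproj s ` DL t m = range (\<lambda>c t' u. c * (unitv t s :: 'a vec2) t' u)"
  proof (rule equalityI)
    show "eproj s ` DL t m \<subseteq> range (\<lambda>c t' u. c * (unitv t s :: 'a vec2) t' u)"
    proof
      fix d' assume "d' \<in> eproj s ` (DL t m :: 'a vec2 set)"
      then obtain d where d: "d \<in> DL t m" and d': "d' = eproj s d" by auto
      have "d' = (\<lambda>t' u. d t s * (unitv t s :: 'a vec2) t' u)"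
      proof (rule ext, rule ext)
        fix t' u
        show "d' t' u = d t s * unitv t s t' u"
          using DL_other[OF d assms(3), of t' s] d' by (cases "t' = t") (auto simp: eproj_def unitv_def)
      qed
      then show "d' \<in> range (\<lambda>c t' u. c * (unitv t s :: 'a vec2) t' u)" by auto
    qed
    show "range (\<lambda>c t' u. c * (unitv t s :: 'a vec2) t' u) \<subseteq> eproj s ` DL t m"
    proof
      fix d assume "d \<in> range (\<lambda>c t' u. c * (unitv t s :: 'a vec2) t' u)"
      then obtain c where d: "d = (\<lambda>t' u. c * (unitv t s :: 'a vec2) t' u)" by auto
      have "d \<in> DL t m" using d assms by (auto simp: DL_def Dcar_def unitv_def)
      moreover have "eproj s d = d" using d by (auto simp: eproj_def unitv_def fun_eq_iff)
      ultimately show "d \<in> eproj s ` DL t m" by (metis image_eqI)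
    qed
  qed
  moreover have "DL t m \<inter> Fil m k x y j = DL t m" using assms by (auto simp: Fil_nonpos DL_def)
  ultimately show ?thesis by simp
qed

lemma img_DL_pos:
  assumes "s < m" "0 < j" "t \<in> {1,2}"
  shows "eproj s ` (DL t m \<inter> Fil m k x y j) =
    (if j \<le> k s \<and> xy x y (3 - t) s = 0 then range (\<lambda>c t u. c * xyv x y s t u) else {0::'a::field vec2})"
proof (cases "j \<le> k s \<and> xy x y (3 - t) s = 0")
  case True
  have "eproj s ` (DL t m \<inter> Fil m k x y j) = range (\<lambda>c t u. c * xyv x y s t u)"
  proof (rule equalityI)
    show "eproj s ` (DL t m \<inter> Fil m k x y j) \<subseteq> range (\<lambda>c t u. c * xyv x y s t u)"
    proof
      fix d' assume "d' \<in> eproj s ` (DL t m \<inter> Fil m k x y j)"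
      then obtain c where d': "d' = eproj s (filv m k x y j c)"
        using assms by (auto simp: Fil_pos)
      then have "d' = (\<lambda>t u. c s * xyv x y s t u)" using assms True by (simp add: eproj_filv)
      then show "d' \<in> range (\<lambda>c t u. c * xyv x y s t u)" by (rule range_eqI)
    qed
    show "range (\<lambda>c t u. c * xyv x y s t u) \<subseteq> eproj s ` (DL t m \<inter> Fil m k x y j)"
    proof
      fix d :: "'a vec2" assume "d \<in> range (\<lambda>c t u. c * xyv x y s t u)"
      then obtain c0 where d: "d = (\<lambda>t u. c0 * xyv x y s t u)" by auto
      let ?c = "\<lambda>s'. if s' = s then c0 else 0"
      have "\<forall>j'. filv m k x y j ?c (3 - t) j' = 0"
        using True by (auto simp: filv_def)
      then have "filv m k x y j ?c \<in> DL t m"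
        using filv_Dcar[of m k x y j ?c] by (simp add: DL_def)
      moreover have "filv m k x y j ?c \<in> Fil m k x y j" using assms by (simp add: Fil_pos)
      moreover have "d = eproj s (filv m k x y j ?c)" using assms True d by (simp add: eproj_filv)
      ultimately show "d \<in> eproj s ` (DL t m \<inter> Fil m k x y j)" by blast
    qed
  qed
  then show ?thesis using True by simp
next
  case False
  have "eproj s ` (DL t m \<inter> Fil m k x y j) \<subseteq> {0}"
  proof
    fix d' assume "d' \<in> eproj s ` (DL t m \<inter> Fil m k x y j)"
    then obtain c where c: "filv m k x y j c \<in> DL t m" and d': "d' = eproj s (filv m k x y j c)"
      using assms by (auto simp: Fil_pos)
    show "d' \<in> {0}"
    proof (cases "j \<le> k s")
      case True
      with False have nz: "xy x y (3 - t) s \<noteq> 0" by simp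
      have "filv m k x y j c (3 - t) s = 0" using c by (simp add: DL_def)
      then have "c s = 0" using nz True assms by (simp add: filv_def)
      then show ?thesis using d' by (simp add: eproj_filv fun_eq_iff)
    next
      case False
      then show ?thesis using d' by (simp add: eproj_filv)
    qed
  qed
  moreover have "(0::'a vec2) \<in> eproj s ` (DL t m \<inter> Fil m k x y j)"
  proof -
    have "filv m k x y j (\<lambda>_. 0) = 0" by (auto simp: filv_def fun_eq_iff)
    moreover have "(0::'a vec2) \<in> DL t m" by (rule DL_zero)
    moreover have "filv m k x y j (\<lambda>_. 0) \<in> Fil m k x y j" using assms by (simp add: Fil_pos)
    moreover have "eproj s 0 = (0::'a vec2)" by (simp add: eproj_def fun_eq_iff)
    ultimately have "eproj s (filv m k x y j (\<lambda>_. 0)) = 0" "filv m k x y j (\<lambda>_. 0) \<in> DL t m \<inter> Fil m k x y j"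
      by simp_all
    then show ?thesis by (metis image_eqI)
  qed
  ultimately have "eproj s ` (DL t m \<inter> Fil m k x y j) = {0}" by blast
  then show ?thesis using False by (simp only: if_False)
qed


lemma baseL_eqI:
  assumes "submod m N" "bc f m ` M \<subseteq> N" "\<And>N'. submod m N' \<Longrightarrow> bc f m ` M \<subseteq> N' \<Longrightarrow> N \<subseteq> N'"
  shows "baseL f m M = N"
  unfolding baseL_def using assms by blast

lemma submod_zero: "submod n {0::'a::comm_ring_1 vec2}"
  by (auto simp: submod_def Dcar_def smul_def fun_eq_iff)

lemma submod_DLt: "t \<in> {1,2} \<Longrightarrow> submod n (DL t n :: 'a::comm_ring_1 vec2 set)"
  by (auto simp: submod_def DL_def Dcar_def smul_def)

lemma submod_Dcar_self: "submod n (Dcar n :: 'a::comm_ring_1 vec2 set)"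
  by (auto simp: submod_def Dcar_def smul_def)

lemma bc_DL: "d \<in> DL t f \<Longrightarrow> bc f m d \<in> DL t m"
  by (auto simp: DL_def Dcar_def bc_def)

lemma bc_Dcar: "d \<in> Dcar f \<Longrightarrow> bc f m d \<in> Dcar m"
  by (auto simp: Dcar_def bc_def)

lemma bc_ones: "1 \<le> f \<Longrightarrow> bc f m (ones t f) = ones t m"
  by (auto simp: bc_def ones_def fun_eq_iff)

lemma baseL_zero: "baseL f m {0::'a::comm_ring_1 vec2} = {0}"
proof (rule baseL_eqI)
  show "submod m {0::'a vec2}" by (rule submod_zero)
  show "bc f m ` {0} \<subseteq> {0::'a vec2}" by (auto simp: bc_def fun_eq_iff)
  fix N' :: "'a vec2 set" assume "submod m N'"
  then show "{0} \<subseteq> N'" by (simp add: submod_def)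
qed

lemma baseL_DL:
  assumes f1: "1 \<le> f" and t: "t \<in> {1,2}"
  shows "baseL f m (DL t f) = (DL t m :: 'a::comm_ring_1 vec2 set)"
proof (rule baseL_eqI)
  show "submod m (DL t m :: 'a vec2 set)" using t by (rule submod_DLt)
  show "bc f m ` DL t f \<subseteq> (DL t m :: 'a vec2 set)" using bc_DL by blast
  fix N' :: "'a vec2 set" assume sm: "submod m N'" and sub: "bc f m ` DL t f \<subseteq> N'"
  have oN: "ones t m \<in> N'"
  proof -
    have "bc f m (ones t f) \<in> N'" using sub ones_DL[OF t] by blast
    then show ?thesis by (simp add: bc_ones[OF f1])
  qed
  show "DL t m \<subseteq> N'"
  proof
    fix d :: "'a vec2" assume d: "d \<in> DL t m"
    have "d = smul (\<lambda>j. d t j) (ones t m)"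
    proof (rule ext, rule ext)
      fix t' j
      show "d t' j = smul (\<lambda>j. d t j) (ones t m) t' j"
        using d t by (cases "t' = 2"; cases "t' = 1") (auto simp: DL_def Dcar_def smul_def ones_def)
    qed
    moreover have "smul (\<lambda>j. d t j) (ones t m) \<in> N'" by (rule submod_smul[OF sm oN])
    ultimately show "d \<in> N'" by simp
  qed
qed

lemma baseL_Dcar:
  assumes f1: "1 \<le> f"
  shows "baseL f m (Dcar f) = (Dcar m :: 'a::comm_ring_1 vec2 set)"
proof (rule baseL_eqI)
  show "submod m (Dcar m :: 'a vec2 set)" by (rule submod_Dcar_self)
  show "bc f m ` Dcar f \<subseteq> (Dcar m :: 'a vec2 set)" using bc_Dcar by blast
  fix N' :: "'a vec2 set" assume sm: "submod m N'" and sub: "bc f m ` Dcar f \<subseteq> N'"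
  have oN: "ones t m \<in> N'" if t: "t \<in> {1,2}" for t
  proof -
    have "bc f m (ones t f) \<in> N'" using sub ones_Dcar[OF t] by blast
    then show ?thesis by (simp add: bc_ones[OF f1])
  qed
  show "Dcar m \<subseteq> N'"
  proof
    fix d :: "'a vec2" assume d: "d \<in> Dcar m"
    have "d = smul (\<lambda>j. d 1 j) (ones 1 m) + smul (\<lambda>j. d 2 j) (ones 2 m)"
    proof (rule ext, rule ext)
      fix t' j
      show "d t' j = (smul (\<lambda>j. d 1 j) (ones 1 m) + smul (\<lambda>j. d 2 j) (ones 2 m)) t' j"
        using d by (cases "t' = 2"; cases "t' = 1") (auto simp: Dcar_def smul_def ones_def)
    qed
    moreover have "smul (\<lambda>j. d 1 j) (ones 1 m) + smul (\<lambda>j. d 2 j) (ones 2 m) \<in> N'"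
      using oN by (intro submod_add[OF sm] submod_smul[OF sm]) auto
    ultimately show "d \<in> N'" by simp
  qed
qed

lemma tH_Dcar:
  fixes x y :: "nat \<Rightarrow> 'a::field"
  assumes f1: "1 \<le> f" and k: "\<forall>i<e * f. 0 \<le> k i" and xy: "\<forall>i<e * f. x i \<noteq> 0 \<or> y i \<noteq> 0"
  shows "tH_sub f e k x y (Dcar f) = (\<Sum>i<e * f. k i)"
proof -
  have "tH (e * f) (\<lambda>j. Dcar (e * f) \<inter> Fil (e * f) k x y j) = (\<Sum>s<e * f. k s * int 1)"
  proof (rule tH_calc[where A = "\<lambda>_. 2"])
    show "\<forall>s<e * f. 0 \<le> k s" by (rule k)
    fix s j assume s: "s < e * f"
    show "Edim (eproj s ` (Dcar (e * f) \<inter> Fil (e * f) k x y j)) =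
      (if j \<le> 0 then 2 else if j \<le> k s then 1 else 0)"
    proof (cases "j \<le> 0")
      case True then show ?thesis using s by (simp add: img_Dcar_nonpos dim_plane)
    next
      case False
      then have j: "0 < j" by simp
      have nz: "xyv x y s \<noteq> 0" using xy s by (intro xyv_nz) auto
      have z: "Edim {0::'a vec2} = 0" by (rule dim_zero_set)
      show ?thesis using False img_Dcar_pos[OF s j, of k x y] dim_line[OF nz] z by simp
    qed
  qed
  then show ?thesis unfolding tH_sub_def by (simp add: baseL_Dcar[OF f1])
qed

lemma tH_DL:
  fixes x y :: "nat \<Rightarrow> 'a::field"
  assumes f1: "1 \<le> f" and t: "t \<in> {1,2}" and k: "\<forall>i<e * f. 0 \<le> k i" and xy: "\<forall>i<e * f. x i \<noteq> 0 \<or> y i \<noteq> 0"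
  shows "tH_sub f e k x y (DL t f) = (\<Sum>s<e * f. k s * int (if xy x y (3 - t) s = 0 then 1 else 0))"
proof -
  have "tH (e * f) (\<lambda>j. DL t (e * f) \<inter> Fil (e * f) k x y j) =
    (\<Sum>s<e * f. k s * int (if xy x y (3 - t) s = 0 then 1 else 0))"
  proof (rule tH_calc[where A = "\<lambda>_. 1"])
    show "\<forall>s<e * f. 0 \<le> k s" by (rule k)
    fix s j assume s: "s < e * f"
    show "Edim (eproj s ` (DL t (e * f) \<inter> Fil (e * f) k x y j)) =
      (if j \<le> 0 then 1 else if j \<le> k s then (if xy x y (3 - t) s = 0 then 1 else 0) else 0)"
    proof (cases "j \<le> 0")
      case True then show ?thesis using s t img_DL_nonpos[OF s True t, of k x y] dim_line[OF unitv_nz] by simp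
    next
      case False
      then have j: "0 < j" by simp
      have nz: "xyv x y s \<noteq> 0" using xy s by (intro xyv_nz) auto
      have z: "Edim {0::'a vec2} = 0" by (rule dim_zero_set)
      show ?thesis using False img_DL_pos[OF s j t, of k x y] dim_line[OF nz] z by simp
    qed
  qed
  then show ?thesis unfolding tH_sub_def by (simp add: baseL_DL[OF f1 t])
qed

lemma tH_zero:
  fixes x y :: "nat \<Rightarrow> 'a::field"
  assumes k: "\<forall>i<e * f. 0 \<le> k i"
  shows "tH_sub f e k x y {0} = 0"
proof -
  have "tH (e * f) (\<lambda>j. {0} \<inter> Fil (e * f) k x y j) = (\<Sum>s<e * f. k s * int 0)"
  proof (rule tH_calc[where A = "\<lambda>_. 0"])
    show "\<forall>s<e * f. 0 \<le> k s" by (rule k)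
    fix s j assume s: "s < e * f"
    have "Edim (eproj s ` ({0::'a vec2} \<inter> Fil (e * f) k x y j)) = 0"
      unfolding img_zero by (rule dim_zero_set)
    then show "Edim (eproj s ` ({0::'a vec2} \<inter> Fil (e * f) k x y j)) = (if j \<le> 0 then 0 else if j \<le> k s then 0 else 0)"
      by simp
  qed
  then show ?thesis unfolding tH_sub_def by (simp add: baseL_zero)
qed

lemma phi_DL: "phiD f a b ` DL t f \<subseteq> DL t f"
  by (auto simp: DL_def phiD_Dcar phiD_eq)

lemma phi_Dcar: "phiD f a b ` Dcar f \<subseteq> Dcar f"
  using phiD_Dcar by blast

lemma phi_zero: "phiD f a b ` {0::'a::comm_ring_1 vec2} \<subseteq> {0}"
  by (auto simp: phiD_eq fun_eq_iff)

lemma sum_ind: "(\<Sum>s<(m::nat). (k s :: int) * int (if P s then 1 else 0)) = (\<Sum>s\<in>{s. s < m \<and> P s}. k s)"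
proof -
  have "(\<Sum>s<m. k s * int (if P s then 1 else 0)) = (\<Sum>s<m. if P s then k s else 0)"
    by (intro sum.cong) auto
  also have "\<dots> = (\<Sum>s\<in>{s\<in>{..<m}. P s}. k s)" by (rule sum.inter_filter[symmetric]) simp
  also have "{s\<in>{..<m}. P s} = {s. s < m \<and> P s}" by auto
  finally show ?thesis .
qed





lemma ex1_two:
  assumes "D1 \<noteq> D2" and P: "\<And>M. P M \<longleftrightarrow> (M = D1 \<and> c1) \<or> (M = D2 \<and> c2)"
  shows "(\<exists>!M. P M) \<longleftrightarrow> (c1 \<noteq> c2)"
proof (cases c1)
  case True
  show ?thesis
  proof (cases c2)
    case True
    have "P D1" "P D2" using P \<open>c1\<close> True by auto
    then have "\<not> (\<exists>!M. P M)" using assms(1) by blast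
    then show ?thesis using \<open>c1\<close> True by simp
  next
    case False
    have "\<exists>!M. P M" using P \<open>c1\<close> False by (intro ex1I[of _ D1]) auto
    then show ?thesis using \<open>c1\<close> False by simp
  qed
next
  case False
  show ?thesis
  proof (cases c2)
    case True
    have "\<exists>!M. P M" using P \<open>\<not> c1\<close> True by (intro ex1I[of _ D2]) auto
    then show ?thesis using \<open>\<not> c1\<close> True by simp
  next
    case False
    have "\<not> (\<exists>M. P M)" using P \<open>\<not> c1\<close> False by auto
    then show ?thesis using \<open>\<not> c1\<close> False by blast
  qed
qed

theorem mainTheorem10:
  fixes v :: "'e::field_char_0 \<Rightarrow> real" and f e :: nat and \<alpha> \<delta> :: 'e
    and k :: "nat \<Rightarrow> int" and x y :: "nat \<Rightarrow> 'e"
    and G :: "'g set" and act :: "'g \<Rightarrow> 'e vec2 \<Rightarrow> 'e vec2"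
  assumes "1 \<le> f" and "1 \<le> e"
    and v_mult: "\<forall>a b. a \<noteq> 0 \<longrightarrow> b \<noteq> 0 \<longrightarrow> v (a * b) = v a + v b"
    and v_ultra: "\<forall>a b. a \<noteq> 0 \<longrightarrow> b \<noteq> 0 \<longrightarrow> a + b \<noteq> 0 \<longrightarrow> min (v a) (v b) \<le> v (a + b)"
    and "\<alpha> \<noteq> 0" and "\<delta> \<noteq> 0" and "\<alpha> ^ f \<noteq> \<delta> ^ f"
    and "\<forall>i<e * f. 0 \<le> k i"
    and "\<forall>i<e * f. x i \<noteq> 0 \<or> y i \<noteq> 0"
    and G_diag: "\<forall>g\<in>G. act g ` Dline1 f \<subseteq> Dline1 f \<and> act g ` Dline2 f \<subseteq> Dline2 f"
    and G_add: "\<forall>g\<in>G. \<forall>a\<in>Dcar f. \<forall>b\<in>Dcar f. act g (a + b) = act g a + act g b"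
    and G_phi: "\<forall>g\<in>G. \<forall>a\<in>Dcar f. act g (phiD f \<alpha> \<delta> a) = phiD f \<alpha> \<delta> (act g a)"
  shows
   "(weakly_admissible v f e \<alpha> \<delta> k x y \<longleftrightarrow>
       real e * real f * v (\<alpha> * \<delta>) = of_int (\<Sum>i<e * f. k i) \<and>
       real e * real f * v \<alpha> \<ge> of_int (\<Sum>i\<in>{i. i < e * f \<and> y i = 0}. k i) \<and>
       real e * real f * v \<delta> \<ge> of_int (\<Sum>i\<in>{i. i < e * f \<and> x i = 0}. k i))
    \<and>
    (weakly_admissible v f e \<alpha> \<delta> k x y \<longrightarrow>
      (irreducible_wa v f e \<alpha> \<delta> k x y G act \<longleftrightarrow>
         real e * real f * v \<alpha> > of_int (\<Sum>i\<in>{i. i < e * f \<and> y i = 0}. k i) \<and>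
         real e * real f * v \<delta> > of_int (\<Sum>i\<in>{i. i < e * f \<and> x i = 0}. k i))
      \<and>
      ((\<exists>!M. wa_subobject v f e \<alpha> \<delta> k x y G act M \<and> M \<noteq> Dcar f) \<longleftrightarrow>
         (real e * real f * v \<alpha> > of_int (\<Sum>i\<in>{i. i < e * f \<and> y i = 0}. k i)) \<noteq>
         (real e * real f * v \<delta> > of_int (\<Sum>i\<in>{i. i < e * f \<and> x i = 0}. k i)))
      \<and>
      (real e * real f * v \<alpha> > of_int (\<Sum>i\<in>{i. i < e * f \<and> y i = 0}. k i) \<and>
       \<not> real e * real f * v \<delta> > of_int (\<Sum>i\<in>{i. i < e * f \<and> x i = 0}. k i) \<longrightarrow>
         (\<forall>M. (wa_subobject v f e \<alpha> \<delta> k x y G act M \<and> M \<noteq> Dcar f) \<longleftrightarrow> M = Dline2 f))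
      \<and>
      (real e * real f * v \<delta> > of_int (\<Sum>i\<in>{i. i < e * f \<and> x i = 0}. k i) \<and>
       \<not> real e * real f * v \<alpha> > of_int (\<Sum>i\<in>{i. i < e * f \<and> y i = 0}. k i) \<longrightarrow>
         (\<forall>M. (wa_subobject v f e \<alpha> \<delta> k x y G act M \<and> M \<noteq> Dcar f) \<longleftrightarrow> M = Dline1 f))
      \<and>
      (wa_subobject v f e \<alpha> \<delta> k x y G act (Dline1 f) \<and> wa_subobject v f e \<alpha> \<delta> k x y G act (Dline2 f)
         \<longleftrightarrow> \<not> (\<exists>i<e * f. 0 < k i \<and> x i \<noteq> 0 \<and> y i \<noteq> 0)))"
proof -
  note f1 = assms(1)
  note a0 = assms(5) and d0 = assms(6) and ad = assms(7) and kpos = assms(8) and xyne = assms(9)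
  define Sa where "Sa = (\<Sum>i<e * f. k i)"
  define Sy where "Sy = (\<Sum>i\<in>{i. i < e * f \<and> y i = 0}. k i)"
  define Sx where "Sx = (\<Sum>i\<in>{i. i < e * f \<and> x i = 0}. k i)"
  define Sb where "Sb = (\<Sum>i\<in>{i. i < e * f \<and> x i \<noteq> 0 \<and> y i \<noteq> 0}. k i)"
  define A where "A = real e * real f * v \<alpha>"
  define B where "B = real e * real f * v \<delta>"
  have v1: "v 1 = 0" using v_mult[rule_format, of 1 1] by simp
  have vpow: "v (a ^ n) = real n * v a" if a: "a \<noteq> 0" for a and n :: nat
  proof (induction n)
    case 0 then show ?case by (simp add: v1)
  next
    case (Suc n)
    have "v (a ^ Suc n) = v (a * a ^ n)" by simp
    also have "\<dots> = v a + v (a ^ n)" using v_mult a by simp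
    finally show ?case using Suc by (simp add: algebra_simps)
  qed
  have vab: "v (\<alpha> * \<delta>) = v \<alpha> + v \<delta>" using v_mult a0 d0 by simp
  have HD: "tH_sub f e k x y (Dcar f) = Sa" unfolding Sa_def using tH_Dcar[OF f1 kpos xyne] .
  have H1: "tH_sub f e k x y (DL 1 f) = Sy"
  proof -
    have "tH_sub f e k x y (DL 1 f) = (\<Sum>s<e * f. k s * int (if xy x y (3 - 1) s = 0 then 1 else 0))"
      using tH_DL[OF f1 _ kpos xyne, of 1] by simp
    also have "\<dots> = (\<Sum>s<e * f. k s * int (if y s = 0 then 1 else 0))" by (simp add: xy_def)
    also have "\<dots> = Sy" unfolding Sy_def by (rule sum_ind)
    finally show ?thesis .
  qed
  have H2: "tH_sub f e k x y (DL 2 f) = Sx"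
  proof -
    have "tH_sub f e k x y (DL 2 f) = (\<Sum>s<e * f. k s * int (if xy x y (3 - 2) s = 0 then 1 else 0))"
      using tH_DL[OF f1 _ kpos xyne, of 2] by simp
    also have "\<dots> = (\<Sum>s<e * f. k s * int (if x s = 0 then 1 else 0))" by (simp add: xy_def)
    also have "\<dots> = Sx" unfolding Sx_def by (rule sum_ind)
    finally show ?thesis .
  qed
  have H0: "tH_sub f e k x y {0} = 0" using tH_zero[OF kpos] .
  have ND: "tN v f e \<alpha> \<delta> (Dcar f) = real e * real f * v (\<alpha> * \<delta>)"
  proof -
    have "tN v f e \<alpha> \<delta> (Dcar f) = real e * v ((\<alpha> * \<delta>) ^ f)"
      by (rule tN_eq[OF Dcar_exists[OF a0 d0]]) (rule Dcar_basis[OF f1])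
    also have "\<dots> = real e * real f * v (\<alpha> * \<delta>)" using vpow[of "\<alpha> * \<delta>" f] a0 d0 by simp
    finally show ?thesis .
  qed
  have N1: "tN v f e \<alpha> \<delta> (DL 1 f) = A"
  proof -
    have ex: "\<exists>r w A. is_free_basis f (DL 1 f) r w \<and> is_phi_matrix f \<alpha> \<delta> r w A"
      by (rule DL_exists) (simp_all add: a0)
    have "tN v f e \<alpha> \<delta> (DL 1 f) = real e * v (lam \<alpha> \<delta> 1 ^ f)"
      by (rule tN_eq[OF ex]) (rule DL_basis[OF f1], simp, assumption+)
    also have "\<dots> = A" using vpow[of \<alpha> f] a0 by (simp add: A_def)
    finally show ?thesis .
  qed
  have N2: "tN v f e \<alpha> \<delta> (DL 2 f) = B"
  proof -
    have ex: "\<exists>r w A. is_free_basis f (DL 2 f) r w \<and> is_phi_matrix f \<alpha> \<delta> r w A"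
      by (rule DL_exists) (simp_all add: d0)
    have "tN v f e \<alpha> \<delta> (DL 2 f) = real e * v (lam \<alpha> \<delta> 2 ^ f)"
      by (rule tN_eq[OF ex]) (rule DL_basis[OF f1], simp, assumption+)
    also have "\<dots> = B" using vpow[of \<delta> f] d0 by (simp add: B_def)
    finally show ?thesis .
  qed
  have N0: "tN v f e \<alpha> \<delta> {0} = 0"
  proof -
    have "tN v f e \<alpha> \<delta> {0} = real e * v 1"
      by (rule tN_eq[OF zero_exists]) (rule zero_basis[OF f1])
    then show ?thesis using v1 by simp
  qed
  have C: "real e * real f * v (\<alpha> * \<delta>) = A + B" unfolding A_def B_def vab by (simp add: algebra_simps)
  have cls: "M = {0} \<or> M = DL 1 f \<or> M = DL 2 f \<or> M = Dcar f"
    if "submod f M" "phiD f \<alpha> \<delta> ` M \<subseteq> M" for M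
    using classify[OF f1 that a0 d0 ad] .
  have sm1: "submod f (DL 1 f :: 'e vec2 set)" and sm2: "submod f (DL 2 f :: 'e vec2 set)"
    and smD: "submod f (Dcar f :: 'e vec2 set)" and sm0: "submod f {0::'e vec2}"
    by (auto intro: submod_DLt submod_Dcar_self submod_zero)
  have ph1: "phiD f \<alpha> \<delta> ` DL 1 f \<subseteq> DL 1 f" and ph2: "phiD f \<alpha> \<delta> ` DL 2 f \<subseteq> DL 2 f"
    and phD: "phiD f \<alpha> \<delta> ` Dcar f \<subseteq> Dcar f" and ph0: "phiD f \<alpha> \<delta> ` {0} \<subseteq> {0::'e vec2}"
    by (rule phi_DL phi_DL phi_Dcar phi_zero)+
  have o1: "ones 1 f \<in> (DL 1 f :: 'e vec2 set)" by (rule ones_DL) simp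
  have o2: "ones 2 f \<in> (DL 2 f :: 'e vec2 set)" by (rule ones_DL) simp
  have o1n: "ones 1 f \<noteq> (0::'e vec2)"
  proof
    assume "ones 1 f = (0::'e vec2)"
    then have "ones 1 f 1 0 = (0::'e)" by simp
    then show False using f1 by (simp add: ones_def)
  qed
  have o2n: "ones 2 f \<noteq> (0::'e vec2)"
  proof
    assume "ones 2 f = (0::'e vec2)"
    then have "ones 2 f 2 0 = (0::'e)" by simp
    then show False using f1 by (simp add: ones_def)
  qed
  have o1D2: "ones 1 f \<notin> (DL 2 f :: 'e vec2 set)"
  proof
    assume "ones 1 f \<in> (DL 2 f :: 'e vec2 set)"
    then have "ones 1 f 1 0 = (0::'e)" by (simp add: DL_def)
    then show False using f1 by (simp add: ones_def)
  qed
  have o2D1: "ones 2 f \<notin> (DL 1 f :: 'e vec2 set)"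
  proof
    assume "ones 2 f \<in> (DL 1 f :: 'e vec2 set)"
    then have "ones 2 f 2 0 = (0::'e)" by (simp add: DL_def)
    then show False using f1 by (simp add: ones_def)
  qed
  have oD: "ones 1 f \<in> (Dcar f :: 'e vec2 set)" "ones 2 f \<in> (Dcar f :: 'e vec2 set)"
    by (rule ones_Dcar, simp)+
  have D1ne0: "DL 1 f \<noteq> {0::'e vec2}" using o1 o1n by auto
  have D2ne0: "DL 2 f \<noteq> {0::'e vec2}" using o2 o2n by auto
  have D1neD: "DL 1 f \<noteq> (Dcar f :: 'e vec2 set)" using oD o2D1 by auto
  have D2neD: "DL 2 f \<noteq> (Dcar f :: 'e vec2 set)" using oD o1D2 by auto
  have D12: "DL 1 f \<noteq> (DL 2 f :: 'e vec2 set)" using o1 o1D2 by auto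
  have G1: "\<forall>g\<in>G. act g ` DL 1 f \<subseteq> DL 1 f" and G2: "\<forall>g\<in>G. act g ` DL 2 f \<subseteq> DL 2 f"
    using G_diag by (auto simp: Dline1_DL Dline2_DL)
  have WA: "weakly_admissible v f e \<alpha> \<delta> k x y \<longleftrightarrow>
      real_of_int Sa = A + B \<and> real_of_int Sy \<le> A \<and> real_of_int Sx \<le> B"
  proof
    assume w: "weakly_admissible v f e \<alpha> \<delta> k x y"
    then have "real_of_int (tH_sub f e k x y (Dcar f)) = tN v f e \<alpha> \<delta> (Dcar f)"
      unfolding weakly_admissible_def by blast
    then have "real_of_int Sa = A + B" using HD ND C by simp
    moreover have "real_of_int (tH_sub f e k x y (DL 1 f)) \<le> tN v f e \<alpha> \<delta> (DL 1 f)"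
      using w sm1 ph1 unfolding weakly_admissible_def by blast
    then have "real_of_int Sy \<le> A" using H1 N1 by simp
    moreover have "real_of_int (tH_sub f e k x y (DL 2 f)) \<le> tN v f e \<alpha> \<delta> (DL 2 f)"
      using w sm2 ph2 unfolding weakly_admissible_def by blast
    then have "real_of_int Sx \<le> B" using H2 N2 by simp
    ultimately show "real_of_int Sa = A + B \<and> real_of_int Sy \<le> A \<and> real_of_int Sx \<le> B" by simp
  next
    assume h: "real_of_int Sa = A + B \<and> real_of_int Sy \<le> A \<and> real_of_int Sx \<le> B"
    show "weakly_admissible v f e \<alpha> \<delta> k x y"
      unfolding weakly_admissible_def
    proof (intro conjI allI impI)
      show "real_of_int (tH_sub f e k x y (Dcar f)) = tN v f e \<alpha> \<delta> (Dcar f)" using h HD ND C by simp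
      fix M assume M: "submod f M \<and> phiD f \<alpha> \<delta> ` M \<subseteq> M"
      then have "M = {0} \<or> M = DL 1 f \<or> M = DL 2 f \<or> M = Dcar f" using cls by blast
      then show "real_of_int (tH_sub f e k x y M) \<le> tN v f e \<alpha> \<delta> M"
        using h HD ND C H1 N1 H2 N2 H0 N0 by auto
    qed
  qed
  have WS: "(wa_subobject v f e \<alpha> \<delta> k x y G act M \<and> M \<noteq> Dcar f) \<longleftrightarrow>
      (M = DL 1 f \<and> real_of_int Sy = A) \<or> (M = DL 2 f \<and> real_of_int Sx = B)" for M
  proof
    assume h: "wa_subobject v f e \<alpha> \<delta> k x y G act M \<and> M \<noteq> Dcar f"
    then have "M = {0} \<or> M = DL 1 f \<or> M = DL 2 f \<or> M = Dcar f" using cls unfolding wa_subobject_def by blast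
    then show "(M = DL 1 f \<and> real_of_int Sy = A) \<or> (M = DL 2 f \<and> real_of_int Sx = B)"
      using h H1 N1 H2 N2 unfolding wa_subobject_def by auto
  next
    assume h: "(M = DL 1 f \<and> real_of_int Sy = A) \<or> (M = DL 2 f \<and> real_of_int Sx = B)"
    then show "wa_subobject v f e \<alpha> \<delta> k x y G act M \<and> M \<noteq> Dcar f"
    proof
      assume h1: "M = DL 1 f \<and> real_of_int Sy = A"
      then show ?thesis using D1ne0 sm1 ph1 G1 H1 N1 D1neD unfolding wa_subobject_def by auto
    next
      assume h2: "M = DL 2 f \<and> real_of_int Sx = B"
      then show ?thesis using D2ne0 sm2 ph2 G2 H2 N2 D2neD unfolding wa_subobject_def by auto
    qed
  qed
  have part: "Sa = Sy + Sx + Sb"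
  proof -
    have "Sa = (\<Sum>i<e * f. k i * int (if y i = 0 then 1 else 0) + k i * int (if x i = 0 then 1 else 0)
        + k i * int (if x i \<noteq> 0 \<and> y i \<noteq> 0 then 1 else 0))"
      unfolding Sa_def using xyne by (intro sum.cong) auto
    also have "\<dots> = Sy + Sx + Sb" unfolding Sy_def Sx_def Sb_def sum_ind[symmetric]
      by (simp add: sum.distrib)
    finally show ?thesis .
  qed
  have Sb0: "0 \<le> Sb" unfolding Sb_def using kpos by (intro sum_nonneg) auto
  have Sbz: "Sb = 0 \<longleftrightarrow> \<not> (\<exists>i<e * f. 0 < k i \<and> x i \<noteq> 0 \<and> y i \<noteq> 0)"
  proof -
    have "Sb = 0 \<longleftrightarrow> (\<forall>i\<in>{i. i < e * f \<and> x i \<noteq> 0 \<and> y i \<noteq> 0}. k i = 0)"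
      unfolding Sb_def using kpos by (intro sum_nonneg_eq_0_iff) auto
    also have "\<dots> \<longleftrightarrow> \<not> (\<exists>i<e * f. 0 < k i \<and> x i \<noteq> 0 \<and> y i \<noteq> 0)"
      using kpos by force
    finally show ?thesis .
  qed
  have irr: "irreducible_wa v f e \<alpha> \<delta> k x y G act \<longleftrightarrow>
      weakly_admissible v f e \<alpha> \<delta> k x y \<and> real_of_int Sy \<noteq> A \<and> real_of_int Sx \<noteq> B"
  proof -
    have "(\<exists>M. wa_subobject v f e \<alpha> \<delta> k x y G act M \<and> M \<noteq> Dcar f) \<longleftrightarrow>
        real_of_int Sy = A \<or> real_of_int Sx = B"
      unfolding WS by blast
    then show ?thesis unfolding irreducible_wa_def by simp
  qed
  have ex1: "(\<exists>!M. wa_subobject v f e \<alpha> \<delta> k x y G act M \<and> M \<noteq> Dcar f) \<longleftrightarrow>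
      ((real_of_int Sy = A) \<noteq> (real_of_int Sx = B))"
    by (rule ex1_two[OF D12]) (rule WS)
  have both: "(wa_subobject v f e \<alpha> \<delta> k x y G act (DL 1 f) \<and> wa_subobject v f e \<alpha> \<delta> k x y G act (DL 2 f))
      \<longleftrightarrow> real_of_int Sy = A \<and> real_of_int Sx = B"
  proof -
    have b1: "wa_subobject v f e \<alpha> \<delta> k x y G act (DL 1 f) \<longleftrightarrow> real_of_int Sy = A"
      using WS[of "DL 1 f"] D1neD D12 by simp
    have b2: "wa_subobject v f e \<alpha> \<delta> k x y G act (DL 2 f) \<longleftrightarrow> real_of_int Sx = B"
      using WS[of "DL 2 f"] D2neD D12 by simp
    show ?thesis using b1 b2 by simp
  qed
  have partr: "real_of_int Sa = real_of_int Sy + real_of_int Sx + real_of_int Sb" using part by simp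
  have Sb0r: "0 \<le> real_of_int Sb" using Sb0 by simp
  have Sbzr: "real_of_int Sb = 0 \<longleftrightarrow> Sb = 0" by simp
  show ?thesis
    unfolding Sa_def[symmetric] Sy_def[symmetric] Sx_def[symmetric] Dline1_DL Dline2_DL
      A_def[symmetric] B_def[symmetric] C
  proof (rule conjI)
    show "weakly_admissible v f e \<alpha> \<delta> k x y \<longleftrightarrow>
        A + B = real_of_int Sa \<and> real_of_int Sy \<le> A \<and> real_of_int Sx \<le> B"
      unfolding WA by auto
    show "weakly_admissible v f e \<alpha> \<delta> k x y \<longrightarrow>
      (irreducible_wa v f e \<alpha> \<delta> k x y G act \<longleftrightarrow> real_of_int Sy < A \<and> real_of_int Sx < B) \<and>
      ((\<exists>!M. wa_subobject v f e \<alpha> \<delta> k x y G act M \<and> M \<noteq> Dcar f) \<longleftrightarrow>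
         (real_of_int Sy < A) \<noteq> (real_of_int Sx < B)) \<and>
      (real_of_int Sy < A \<and> \<not> real_of_int Sx < B \<longrightarrow>
         (\<forall>M. (wa_subobject v f e \<alpha> \<delta> k x y G act M \<and> M \<noteq> Dcar f) \<longleftrightarrow> M = DL 2 f)) \<and>
      (real_of_int Sx < B \<and> \<not> real_of_int Sy < A \<longrightarrow>
         (\<forall>M. (wa_subobject v f e \<alpha> \<delta> k x y G act M \<and> M \<noteq> Dcar f) \<longleftrightarrow> M = DL 1 f)) \<and>
      (wa_subobject v f e \<alpha> \<delta> k x y G act (DL 1 f) \<and> wa_subobject v f e \<alpha> \<delta> k x y G act (DL 2 f) \<longleftrightarrow>
         \<not> (\<exists>i<e * f. 0 < k i \<and> x i \<noteq> 0 \<and> y i \<noteq> 0))"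
    proof
      assume w: "weakly_admissible v f e \<alpha> \<delta> k x y"
      then have h: "real_of_int Sa = A + B" "real_of_int Sy \<le> A" "real_of_int Sx \<le> B"
        using WA by auto
      have sA: "real_of_int Sy < A \<longleftrightarrow> real_of_int Sy \<noteq> A" using h by auto
      have sB: "real_of_int Sx < B \<longleftrightarrow> real_of_int Sx \<noteq> B" using h by auto
      have lastc: "(real_of_int Sy = A \<and> real_of_int Sx = B) \<longleftrightarrow> Sb = 0"
      proof
        assume "real_of_int Sy = A \<and> real_of_int Sx = B"
        then have "real_of_int Sb = 0" using h partr by linarith
        then show "Sb = 0" by simp
      next
        assume "Sb = 0"
        then have "real_of_int Sb = 0" by simp
        then show "real_of_int Sy = A \<and> real_of_int Sx = B" using h partr by linarith
      qed
      show "(irreducible_wa v f e \<alpha> \<delta> k x y G act \<longleftrightarrow> real_of_int Sy < A \<and> real_of_int Sx < B) \<and>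
      ((\<exists>!M. wa_subobject v f e \<alpha> \<delta> k x y G act M \<and> M \<noteq> Dcar f) \<longleftrightarrow>
         (real_of_int Sy < A) \<noteq> (real_of_int Sx < B)) \<and>
      (real_of_int Sy < A \<and> \<not> real_of_int Sx < B \<longrightarrow>
         (\<forall>M. (wa_subobject v f e \<alpha> \<delta> k x y G act M \<and> M \<noteq> Dcar f) \<longleftrightarrow> M = DL 2 f)) \<and>
      (real_of_int Sx < B \<and> \<not> real_of_int Sy < A \<longrightarrow>
         (\<forall>M. (wa_subobject v f e \<alpha> \<delta> k x y G act M \<and> M \<noteq> Dcar f) \<longleftrightarrow> M = DL 1 f)) \<and>
      (wa_subobject v f e \<alpha> \<delta> k x y G act (DL 1 f) \<and> wa_subobject v f e \<alpha> \<delta> k x y G act (DL 2 f) \<longleftrightarrow>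
         \<not> (\<exists>i<e * f. 0 < k i \<and> x i \<noteq> 0 \<and> y i \<noteq> 0))"
      proof (intro conjI)
        show "irreducible_wa v f e \<alpha> \<delta> k x y G act \<longleftrightarrow> real_of_int Sy < A \<and> real_of_int Sx < B"
          unfolding irr sA sB using w by simp
        show "(\<exists>!M. wa_subobject v f e \<alpha> \<delta> k x y G act M \<and> M \<noteq> Dcar f) \<longleftrightarrow>
            (real_of_int Sy < A) \<noteq> (real_of_int Sx < B)"
          unfolding ex1 sA sB by simp
        show "real_of_int Sy < A \<and> \<not> real_of_int Sx < B \<longrightarrow>
            (\<forall>M. (wa_subobject v f e \<alpha> \<delta> k x y G act M \<and> M \<noteq> Dcar f) \<longleftrightarrow> M = DL 2 f)"
          unfolding WS sA sB using D12 by auto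
        show "real_of_int Sx < B \<and> \<not> real_of_int Sy < A \<longrightarrow>
            (\<forall>M. (wa_subobject v f e \<alpha> \<delta> k x y G act M \<and> M \<noteq> Dcar f) \<longleftrightarrow> M = DL 1 f)"
          unfolding WS sA sB using D12 by auto
        show "wa_subobject v f e \<alpha> \<delta> k x y G act (DL 1 f) \<and> wa_subobject v f e \<alpha> \<delta> k x y G act (DL 2 f) \<longleftrightarrow>
            \<not> (\<exists>i<e * f. 0 < k i \<and> x i \<noteq> 0 \<and> y i \<noteq> 0)"
          unfolding both lastc Sbz ..
      qed
    qed
  qed
qed


end
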